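(* Let $\mathcal{A}$ and $\mathcal{B}$ be monoidal categories (not necessarily strict). Then $\mathcal{A}$ and $\mathcal{B}$ are monoidally equivalent if and only if there exist a monoidal category $\mathcal{C}$ and strict monoidal functors $P\colon \mathcal{C}\to\mathcal{A}$ and $Q\colon\mathcal{C}\to\mathcal{B}$ each of which is a surjective equivalence.
   Context: Monoidal categories $\mathcal{A},\mathcal{B}$ are monoidally equivalent if there exist strong monoidal functors $F\colon\mathcal{A}\to\mathcal{B}$, $G\colon\mathcal{B}\to\mathcal{A}$ and monoidal natural isomorphisms $1_{\mathcal{A}}\cong GF$ and $FG\cong 1_{\mathcal{B}}$. A strict monoidal functor is a monoidal functor whose coherence maps are identities, so that e.g. $P(c\otimes c') = P(c)\otimes P(c')$ and $P(I)=I$ as objects (the monoidal categories themselves need not be strict). A functor is a surjective equivalence if it is surjective on objects (genuinely), full, and faithful. *)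

theory Defs
  imports Main
begin

record ('o, 'm) moncat =
  cObj :: "'o set"
  cArr :: "'m set"
  cDom :: "'m \<Rightarrow> 'o"
  cCod :: "'m \<Rightarrow> 'o"
  cId  :: "'o \<Rightarrow> 'm"
  cComp :: "'m \<Rightarrow> 'm \<Rightarrow> 'm"   (* cComp C g f = g o f *)
  cTo :: "'o \<Rightarrow> 'o \<Rightarrow> 'o"
  cTa :: "'m \<Rightarrow> 'm \<Rightarrow> 'm"
  cUnit :: "'o"
  cAssoc :: "'o \<Rightarrow> 'o \<Rightarrow> 'o \<Rightarrow> 'm"  (* (a (x) b) (x) c -> a (x) (b (x) c) *)
  cLunit :: "'o \<Rightarrow> 'm"                (* I (x) a -> a *)
  cRunit :: "'o \<Rightarrow> 'm"                (* a (x) I -> a *)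

definition hom :: "('o, 'm) moncat \<Rightarrow> 'o \<Rightarrow> 'o \<Rightarrow> 'm set" where
  "hom C a b = {f \<in> cArr C. cDom C f = a \<and> cCod C f = b}"

definition category :: "('o, 'm) moncat \<Rightarrow> bool" where
  "category C \<longleftrightarrow>
     (\<forall>f\<in>cArr C. cDom C f \<in> cObj C \<and> cCod C f \<in> cObj C)
   \<and> (\<forall>a\<in>cObj C. cId C a \<in> hom C a a)
   \<and> (\<forall>f\<in>cArr C. \<forall>g\<in>cArr C. cCod C f = cDom C g \<longrightarrow>
          cComp C g f \<in> hom C (cDom C f) (cCod C g))
   \<and> (\<forall>f\<in>cArr C. cComp C f (cId C (cDom C f)) = f \<and> cComp C (cId C (cCod C f)) f = f)
   \<and> (\<forall>f\<in>cArr C. \<forall>g\<in>cArr C. \<forall>h\<in>cArr C. cCod C f = cDom C g \<and> cCod C g = cDom C h \<longrightarrow>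
          cComp C h (cComp C g f) = cComp C (cComp C h g) f)"

definition iso :: "('o, 'm) moncat \<Rightarrow> 'm \<Rightarrow> bool" where
  "iso C f \<longleftrightarrow> f \<in> cArr C \<and>
     (\<exists>g\<in>hom C (cCod C f) (cDom C f).
        cComp C g f = cId C (cDom C f) \<and> cComp C f g = cId C (cCod C f))"

definition monoidal_category :: "('o, 'm) moncat \<Rightarrow> bool" where
  "monoidal_category C \<longleftrightarrow> category C
   \<comment> \<open>tensor is a bifunctor\<close>
   \<and> (\<forall>a\<in>cObj C. \<forall>b\<in>cObj C. cTo C a b \<in> cObj C)
   \<and> (\<forall>f\<in>cArr C. \<forall>g\<in>cArr C. cTa C f g \<in>
          hom C (cTo C (cDom C f) (cDom C g)) (cTo C (cCod C f) (cCod C g)))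
   \<and> (\<forall>a\<in>cObj C. \<forall>b\<in>cObj C. cTa C (cId C a) (cId C b) = cId C (cTo C a b))
   \<and> (\<forall>f\<in>cArr C. \<forall>f'\<in>cArr C. \<forall>g\<in>cArr C. \<forall>g'\<in>cArr C.
          cCod C f = cDom C f' \<and> cCod C g = cDom C g' \<longrightarrow>
          cTa C (cComp C f' f) (cComp C g' g) = cComp C (cTa C f' g') (cTa C f g))
   \<and> cUnit C \<in> cObj C
   \<comment> \<open>associator: natural isomorphism\<close>
   \<and> (\<forall>a\<in>cObj C. \<forall>b\<in>cObj C. \<forall>c\<in>cObj C.
          cAssoc C a b c \<in> hom C (cTo C (cTo C a b) c) (cTo C a (cTo C b c))
          \<and> iso C (cAssoc C a b c))
   \<and> (\<forall>f\<in>cArr C. \<forall>g\<in>cArr C. \<forall>h\<in>cArr C.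
          cComp C (cAssoc C (cCod C f) (cCod C g) (cCod C h)) (cTa C (cTa C f g) h)
        = cComp C (cTa C f (cTa C g h)) (cAssoc C (cDom C f) (cDom C g) (cDom C h)))
   \<comment> \<open>unitors: natural isomorphisms\<close>
   \<and> (\<forall>a\<in>cObj C. cLunit C a \<in> hom C (cTo C (cUnit C) a) a \<and> iso C (cLunit C a))
   \<and> (\<forall>a\<in>cObj C. cRunit C a \<in> hom C (cTo C a (cUnit C)) a \<and> iso C (cRunit C a))
   \<and> (\<forall>f\<in>cArr C. cComp C (cLunit C (cCod C f)) (cTa C (cId C (cUnit C)) f)
                  = cComp C f (cLunit C (cDom C f)))
   \<and> (\<forall>f\<in>cArr C. cComp C (cRunit C (cCod C f)) (cTa C f (cId C (cUnit C)))
                  = cComp C f (cRunit C (cDom C f)))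
   \<comment> \<open>pentagon\<close>
   \<and> (\<forall>a\<in>cObj C. \<forall>b\<in>cObj C. \<forall>c\<in>cObj C. \<forall>d\<in>cObj C.
          cComp C (cAssoc C a b (cTo C c d)) (cAssoc C (cTo C a b) c d)
        = cComp C (cTa C (cId C a) (cAssoc C b c d))
            (cComp C (cAssoc C a (cTo C b c) d) (cTa C (cAssoc C a b c) (cId C d))))
   \<comment> \<open>triangle\<close>
   \<and> (\<forall>a\<in>cObj C. \<forall>b\<in>cObj C.
          cComp C (cTa C (cId C a) (cLunit C b)) (cAssoc C a (cUnit C) b)
        = cTa C (cRunit C a) (cId C b))"

record ('o, 'm, 'p, 'n) mfun =
  FO :: "'o \<Rightarrow> 'p"
  FA :: "'m \<Rightarrow> 'n"
  Mu :: "'o \<Rightarrow> 'o \<Rightarrow> 'n"   (* F a (x) F b -> F (a (x) b) *)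
  Eps :: "'n"                (* I -> F I *)

definition is_functor ::
  "('o, 'm) moncat \<Rightarrow> ('p, 'n) moncat \<Rightarrow> ('o, 'm, 'p, 'n) mfun \<Rightarrow> bool" where
  "is_functor C D F \<longleftrightarrow>
     (\<forall>a\<in>cObj C. FO F a \<in> cObj D)
   \<and> (\<forall>f\<in>cArr C. FA F f \<in> hom D (FO F (cDom C f)) (FO F (cCod C f)))
   \<and> (\<forall>a\<in>cObj C. FA F (cId C a) = cId D (FO F a))
   \<and> (\<forall>f\<in>cArr C. \<forall>g\<in>cArr C. cCod C f = cDom C g \<longrightarrow>
          FA F (cComp C g f) = cComp D (FA F g) (FA F f))"

definition strong_monoidal_functor ::
  "('o, 'm) moncat \<Rightarrow> ('p, 'n) moncat \<Rightarrow> ('o, 'm, 'p, 'n) mfun \<Rightarrow> bool" where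
  "strong_monoidal_functor C D F \<longleftrightarrow>
     monoidal_category C \<and> monoidal_category D \<and> is_functor C D F
   \<and> (\<forall>a\<in>cObj C. \<forall>b\<in>cObj C.
          Mu F a b \<in> hom D (cTo D (FO F a) (FO F b)) (FO F (cTo C a b)) \<and> iso D (Mu F a b))
   \<and> (\<forall>f\<in>cArr C. \<forall>g\<in>cArr C.
          cComp D (Mu F (cCod C f) (cCod C g)) (cTa D (FA F f) (FA F g))
        = cComp D (FA F (cTa C f g)) (Mu F (cDom C f) (cDom C g)))
   \<and> Eps F \<in> hom D (cUnit D) (FO F (cUnit C)) \<and> iso D (Eps F)
   \<and> (\<forall>a\<in>cObj C. \<forall>b\<in>cObj C. \<forall>c\<in>cObj C.
          cComp D (FA F (cAssoc C a b c))
            (cComp D (Mu F (cTo C a b) c) (cTa D (Mu F a b) (cId D (FO F c))))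
        = cComp D (Mu F a (cTo C b c))
            (cComp D (cTa D (cId D (FO F a)) (Mu F b c))
               (cAssoc D (FO F a) (FO F b) (FO F c))))
   \<and> (\<forall>a\<in>cObj C.
          cComp D (FA F (cLunit C a))
            (cComp D (Mu F (cUnit C) a) (cTa D (Eps F) (cId D (FO F a))))
        = cLunit D (FO F a))
   \<and> (\<forall>a\<in>cObj C.
          cComp D (FA F (cRunit C a))
            (cComp D (Mu F a (cUnit C)) (cTa D (cId D (FO F a)) (Eps F)))
        = cRunit D (FO F a))"

definition strict_monoidal_functor ::
  "('o, 'm) moncat \<Rightarrow> ('p, 'n) moncat \<Rightarrow> ('o, 'm, 'p, 'n) mfun \<Rightarrow> bool" where
  "strict_monoidal_functor C D F \<longleftrightarrow>
     strong_monoidal_functor C D F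
   \<and> (\<forall>a\<in>cObj C. \<forall>b\<in>cObj C.
          FO F (cTo C a b) = cTo D (FO F a) (FO F b)
        \<and> Mu F a b = cId D (cTo D (FO F a) (FO F b)))
   \<and> FO F (cUnit C) = cUnit D \<and> Eps F = cId D (cUnit D)"

definition mid :: "('o, 'm) moncat \<Rightarrow> ('o, 'm, 'o, 'm) mfun" where
  "mid C = \<lparr>FO = (\<lambda>a. a), FA = (\<lambda>f. f), Mu = (\<lambda>a b. cId C (cTo C a b)), Eps = cId C (cUnit C)\<rparr>"

text \<open>mcomp E F G is the composite G F (first F, then G), E the target of G.\<close>
definition mcomp ::
  "('q, 'k) moncat \<Rightarrow> ('o, 'm, 'p, 'n) mfun \<Rightarrow> ('p, 'n, 'q, 'k) mfun \<Rightarrow> ('o, 'm, 'q, 'k) mfun" where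
  "mcomp E F G = \<lparr>FO = (\<lambda>a. FO G (FO F a)), FA = (\<lambda>f. FA G (FA F f)),
      Mu = (\<lambda>a b. cComp E (FA G (Mu F a b)) (Mu G (FO F a) (FO F b))),
      Eps = cComp E (FA G (Eps F)) (Eps G)\<rparr>"

definition monoidal_nat_iso ::
  "('o, 'm) moncat \<Rightarrow> ('p, 'n) moncat \<Rightarrow> ('o, 'm, 'p, 'n) mfun \<Rightarrow> ('o, 'm, 'p, 'n) mfun
     \<Rightarrow> ('o \<Rightarrow> 'n) \<Rightarrow> bool" where
  "monoidal_nat_iso C D F G \<theta> \<longleftrightarrow>
     (\<forall>a\<in>cObj C. \<theta> a \<in> hom D (FO F a) (FO G a) \<and> iso D (\<theta> a))
   \<and> (\<forall>f\<in>cArr C. cComp D (\<theta> (cCod C f)) (FA F f) = cComp D (FA G f) (\<theta> (cDom C f)))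
   \<and> (\<forall>a\<in>cObj C. \<forall>b\<in>cObj C.
          cComp D (\<theta> (cTo C a b)) (Mu F a b) = cComp D (Mu G a b) (cTa D (\<theta> a) (\<theta> b)))
   \<and> cComp D (\<theta> (cUnit C)) (Eps F) = Eps G"

definition monoidally_equivalent :: "('a, 'am) moncat \<Rightarrow> ('b, 'bm) moncat \<Rightarrow> bool" where
  "monoidally_equivalent A B \<longleftrightarrow>
     (\<exists>(F :: ('a, 'am, 'b, 'bm) mfun) (G :: ('b, 'bm, 'a, 'am) mfun) \<eta> \<epsilon>.
        strong_monoidal_functor A B F \<and> strong_monoidal_functor B A G
      \<and> monoidal_nat_iso A A (mid A) (mcomp A F G) \<eta>
      \<and> monoidal_nat_iso B B (mcomp B G F) (mid B) \<epsilon>)"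

definition surjective_equivalence ::
  "('o, 'm) moncat \<Rightarrow> ('p, 'n) moncat \<Rightarrow> ('o, 'm, 'p, 'n) mfun \<Rightarrow> bool" where
  "surjective_equivalence C D F \<longleftrightarrow> is_functor C D F
   \<and> (\<forall>b\<in>cObj D. \<exists>a\<in>cObj C. FO F a = b)
   \<and> (\<forall>a\<in>cObj C. \<forall>b\<in>cObj C. \<forall>g\<in>hom D (FO F a) (FO F b). \<exists>f\<in>hom C a b. FA F f = g)
   \<and> (\<forall>a\<in>cObj C. \<forall>b\<in>cObj C. \<forall>f\<in>hom C a b. \<forall>f'\<in>hom C a b. FA F f = FA F f' \<longrightarrow> f = f')"

end

theory Submission
  imports Defs
begin


lemma in_hom[simp]: "f \<in> hom C a b \<longleftrightarrow> f \<in> cArr C \<and> cDom C f = a \<and> cCod C f = b"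
  by (simp add: hom_def)

locale MC = fixes C :: "('o,'m) moncat" assumes mc: "monoidal_category C"
begin

lemma cat: "category C" using mc by (simp add: monoidal_category_def)

lemma dom_obj[simp]: "f \<in> cArr C \<Longrightarrow> cDom C f \<in> cObj C"
  using cat unfolding category_def by blast
lemma cod_obj[simp]: "f \<in> cArr C \<Longrightarrow> cCod C f \<in> cObj C"
  using cat unfolding category_def by blast
lemma id_arr[simp]: "a \<in> cObj C \<Longrightarrow> cId C a \<in> cArr C"
  using cat unfolding category_def by auto
lemma id_dom[simp]: "a \<in> cObj C \<Longrightarrow> cDom C (cId C a) = a"
  using cat unfolding category_def by auto
lemma id_cod[simp]: "a \<in> cObj C \<Longrightarrow> cCod C (cId C a) = a"
  using cat unfolding category_def by auto
lemma comp_arr[simp]: "f \<in> cArr C \<Longrightarrow> g \<in> cArr C \<Longrightarrow> cCod C f = cDom C g \<Longrightarrow> cComp C g f \<in> cArr C"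
  using cat unfolding category_def by auto
lemma comp_dom[simp]: "f \<in> cArr C \<Longrightarrow> g \<in> cArr C \<Longrightarrow> cCod C f = cDom C g \<Longrightarrow> cDom C (cComp C g f) = cDom C f"
  using cat unfolding category_def by auto
lemma comp_cod[simp]: "f \<in> cArr C \<Longrightarrow> g \<in> cArr C \<Longrightarrow> cCod C f = cDom C g \<Longrightarrow> cCod C (cComp C g f) = cCod C g"
  using cat unfolding category_def by auto
lemma comp_id_r[simp]: "f \<in> cArr C \<Longrightarrow> cDom C f = a \<Longrightarrow> cComp C f (cId C a) = f"
  using cat unfolding category_def by auto
lemma comp_id_l[simp]: "f \<in> cArr C \<Longrightarrow> cCod C f = a \<Longrightarrow> cComp C (cId C a) f = f"
  using cat unfolding category_def by auto
lemma comp_assoc[simp]: "f \<in> cArr C \<Longrightarrow> g \<in> cArr C \<Longrightarrow> h \<in> cArr C \<Longrightarrow> cCod C f = cDom C g \<Longrightarrow> cCod C g = cDom C h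
   \<Longrightarrow> cComp C (cComp C h g) f = cComp C h (cComp C g f)"
  using cat unfolding category_def by metis

lemma comp_reassoc: "cComp C h k = e \<Longrightarrow> h \<in> cArr C \<Longrightarrow> k \<in> cArr C \<Longrightarrow> x \<in> cArr C \<Longrightarrow>
  cCod C x = cDom C k \<Longrightarrow> cCod C k = cDom C h \<Longrightarrow> cComp C h (cComp C k x) = cComp C e x"
  by (metis comp_assoc)

lemma comp_reassoc3: "cComp C h (cComp C k l) = e \<Longrightarrow> h \<in> cArr C \<Longrightarrow> k \<in> cArr C \<Longrightarrow> l \<in> cArr C \<Longrightarrow> x \<in> cArr C \<Longrightarrow>
  cCod C x = cDom C l \<Longrightarrow> cCod C l = cDom C k \<Longrightarrow> cCod C k = cDom C h \<Longrightarrow> cComp C h (cComp C k (cComp C l x)) = cComp C e x"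
  by (metis comp_assoc comp_arr comp_dom comp_cod)

lemma to_obj[simp]: "a \<in> cObj C \<Longrightarrow> b \<in> cObj C \<Longrightarrow> cTo C a b \<in> cObj C"
  using mc by (simp add: monoidal_category_def)
lemma ta_arr[simp]: "f \<in> cArr C \<Longrightarrow> g \<in> cArr C \<Longrightarrow> cTa C f g \<in> cArr C"
  using mc by (simp add: monoidal_category_def)
lemma ta_dom[simp]: "f \<in> cArr C \<Longrightarrow> g \<in> cArr C \<Longrightarrow> cDom C (cTa C f g) = cTo C (cDom C f) (cDom C g)"
  using mc by (simp add: monoidal_category_def)
lemma ta_cod[simp]: "f \<in> cArr C \<Longrightarrow> g \<in> cArr C \<Longrightarrow> cCod C (cTa C f g) = cTo C (cCod C f) (cCod C g)"
  using mc by (simp add: monoidal_category_def)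
lemma ta_id[simp]: "a \<in> cObj C \<Longrightarrow> b \<in> cObj C \<Longrightarrow> cTa C (cId C a) (cId C b) = cId C (cTo C a b)"
  using mc by (simp add: monoidal_category_def)
lemma interchange: "f \<in> cArr C \<Longrightarrow> f' \<in> cArr C \<Longrightarrow> g \<in> cArr C \<Longrightarrow> g' \<in> cArr C \<Longrightarrow>
          cCod C f = cDom C f' \<Longrightarrow> cCod C g = cDom C g' \<Longrightarrow>
          cTa C (cComp C f' f) (cComp C g' g) = cComp C (cTa C f' g') (cTa C f g)"
  using mc by (simp add: monoidal_category_def)
lemma unit_obj[simp]: "cUnit C \<in> cObj C"
  using mc by (simp add: monoidal_category_def)

lemma assoc_arr[simp]: "a \<in> cObj C \<Longrightarrow> b \<in> cObj C \<Longrightarrow> c \<in> cObj C \<Longrightarrow> cAssoc C a b c \<in> cArr C"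
  using mc by (simp add: monoidal_category_def)
lemma assoc_dom[simp]: "a \<in> cObj C \<Longrightarrow> b \<in> cObj C \<Longrightarrow> c \<in> cObj C \<Longrightarrow> cDom C (cAssoc C a b c) = cTo C (cTo C a b) c"
  using mc by (simp add: monoidal_category_def)
lemma assoc_cod[simp]: "a \<in> cObj C \<Longrightarrow> b \<in> cObj C \<Longrightarrow> c \<in> cObj C \<Longrightarrow> cCod C (cAssoc C a b c) = cTo C a (cTo C b c)"
  using mc by (simp add: monoidal_category_def)
lemma assoc_iso: "a \<in> cObj C \<Longrightarrow> b \<in> cObj C \<Longrightarrow> c \<in> cObj C \<Longrightarrow> iso C (cAssoc C a b c)"
  using mc by (simp add: monoidal_category_def)
lemma assoc_nat: "f \<in> cArr C \<Longrightarrow> g \<in> cArr C \<Longrightarrow> h \<in> cArr C \<Longrightarrow>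
          cComp C (cAssoc C (cCod C f) (cCod C g) (cCod C h)) (cTa C (cTa C f g) h)
        = cComp C (cTa C f (cTa C g h)) (cAssoc C (cDom C f) (cDom C g) (cDom C h))"
  using mc by (simp add: monoidal_category_def)
lemma lunit_arr[simp]: "a \<in> cObj C \<Longrightarrow> cLunit C a \<in> cArr C"
  using mc by (simp add: monoidal_category_def)
lemma lunit_dom[simp]: "a \<in> cObj C \<Longrightarrow> cDom C (cLunit C a) = cTo C (cUnit C) a"
  using mc by (simp add: monoidal_category_def)
lemma lunit_cod[simp]: "a \<in> cObj C \<Longrightarrow> cCod C (cLunit C a) = a"
  using mc by (simp add: monoidal_category_def)
lemma lunit_iso: "a \<in> cObj C \<Longrightarrow> iso C (cLunit C a)"
  using mc by (simp add: monoidal_category_def)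
lemma runit_arr[simp]: "a \<in> cObj C \<Longrightarrow> cRunit C a \<in> cArr C"
  using mc by (simp add: monoidal_category_def)
lemma runit_dom[simp]: "a \<in> cObj C \<Longrightarrow> cDom C (cRunit C a) = cTo C a (cUnit C)"
  using mc by (simp add: monoidal_category_def)
lemma runit_cod[simp]: "a \<in> cObj C \<Longrightarrow> cCod C (cRunit C a) = a"
  using mc by (simp add: monoidal_category_def)
lemma runit_iso: "a \<in> cObj C \<Longrightarrow> iso C (cRunit C a)"
  using mc by (simp add: monoidal_category_def)
lemma lunit_nat: "f \<in> cArr C \<Longrightarrow> cComp C (cLunit C (cCod C f)) (cTa C (cId C (cUnit C)) f)
                  = cComp C f (cLunit C (cDom C f))"
  using mc by (simp add: monoidal_category_def)
lemma runit_nat: "f \<in> cArr C \<Longrightarrow> cComp C (cRunit C (cCod C f)) (cTa C f (cId C (cUnit C)))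
                  = cComp C f (cRunit C (cDom C f))"
  using mc by (simp add: monoidal_category_def)
lemma pentagon: "a \<in> cObj C \<Longrightarrow> b \<in> cObj C \<Longrightarrow> c \<in> cObj C \<Longrightarrow> d \<in> cObj C \<Longrightarrow>
          cComp C (cAssoc C a b (cTo C c d)) (cAssoc C (cTo C a b) c d)
        = cComp C (cTa C (cId C a) (cAssoc C b c d))
            (cComp C (cAssoc C a (cTo C b c) d) (cTa C (cAssoc C a b c) (cId C d)))"
  using mc by (simp add: monoidal_category_def)
lemma triangle: "a \<in> cObj C \<Longrightarrow> b \<in> cObj C \<Longrightarrow>
          cComp C (cTa C (cId C a) (cLunit C b)) (cAssoc C a (cUnit C) b)
        = cTa C (cRunit C a) (cId C b)"
  using mc by (simp add: monoidal_category_def)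

lemma iso_arr: "iso C f \<Longrightarrow> f \<in> cArr C" by (simp add: iso_def)

lemma iso_inv: assumes "iso C f"
  obtains g where "g \<in> cArr C" "cDom C g = cCod C f" "cCod C g = cDom C f"
    "cComp C g f = cId C (cDom C f)" "cComp C f g = cId C (cCod C f)"
  using assms unfolding iso_def by auto

lemma iso_id: "a \<in> cObj C \<Longrightarrow> iso C (cId C a)"
  unfolding iso_def by (rule conjI, simp, rule bexI[of _ "cId C a"]) auto

lemma iso_comp: assumes "iso C f" "iso C g" "cCod C f = cDom C g" shows "iso C (cComp C g f)"
proof -
  obtain f' where f': "f' \<in> cArr C" "cDom C f' = cCod C f" "cCod C f' = cDom C f"
    "cComp C f' f = cId C (cDom C f)" "cComp C f f' = cId C (cCod C f)" using iso_inv[OF assms(1)] by blast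
  obtain g' where g': "g' \<in> cArr C" "cDom C g' = cCod C g" "cCod C g' = cDom C g"
    "cComp C g' g = cId C (cDom C g)" "cComp C g g' = cId C (cCod C g)" using iso_inv[OF assms(2)] by blast
  have a: "f \<in> cArr C" "g \<in> cArr C" using assms iso_arr by auto
  have 1: "cComp C (cComp C f' g') (cComp C g f) = cId C (cDom C f)"
  proof -
    have "cComp C (cComp C f' g') (cComp C g f) = cComp C f' (cComp C (cComp C g' g) f)"
      using a f' g' assms(3) by (simp add: comp_reassoc[OF g'(4)])
    also have "\<dots> = cId C (cDom C f)" using a f' g' assms(3) by (simp add: comp_reassoc[OF f'(4)])
    finally show ?thesis .
  qed
  have 2: "cComp C (cComp C g f) (cComp C f' g') = cId C (cCod C g)"
  proof -
    have "cComp C (cComp C g f) (cComp C f' g') = cComp C g (cComp C (cComp C f f') g')"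
      using a f'(1-3) g'(1-3) assms(3) by simp
    also have "\<dots> = cId C (cCod C g)" using a f'(1-3) g' assms(3) by (simp add: comp_reassoc[OF f'(5)])
    finally show ?thesis .
  qed
  show ?thesis unfolding iso_def
    apply (rule conjI) using a assms(3) apply simp
    apply (rule bexI[of _ "cComp C f' g'"]) using 1 2 a f' g' assms(3) by auto
qed

lemma iso_ta: assumes "iso C f" "iso C g" shows "iso C (cTa C f g)"
proof -
  obtain f' where f': "f' \<in> cArr C" "cDom C f' = cCod C f" "cCod C f' = cDom C f"
    "cComp C f' f = cId C (cDom C f)" "cComp C f f' = cId C (cCod C f)" using iso_inv[OF assms(1)] by blast
  obtain g' where g': "g' \<in> cArr C" "cDom C g' = cCod C g" "cCod C g' = cDom C g"
    "cComp C g' g = cId C (cDom C g)" "cComp C g g' = cId C (cCod C g)" using iso_inv[OF assms(2)] by blast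
  have a: "f \<in> cArr C" "g \<in> cArr C" using assms iso_arr by auto
  have 1: "cComp C (cTa C f' g') (cTa C f g) = cId C (cDom C (cTa C f g))"
    using a f' g' by (simp add: interchange[symmetric])
  have 2: "cComp C (cTa C f g) (cTa C f' g') = cId C (cCod C (cTa C f g))"
    using a f' g' by (simp add: interchange[symmetric])
  show ?thesis unfolding iso_def
    apply (rule conjI) using a apply simp
    apply (rule bexI[of _ "cTa C f' g'"]) using 1 2 a f' g' by auto
qed

lemma iso_mono: assumes "iso C m" "x \<in> cArr C" "y \<in> cArr C" "cCod C x = cDom C m" "cCod C y = cDom C m"
  "cComp C m x = cComp C m y" shows "x = y"
proof -
  obtain m' where m': "m' \<in> cArr C" "cDom C m' = cCod C m" "cCod C m' = cDom C m"
    "cComp C m' m = cId C (cDom C m)" "cComp C m m' = cId C (cCod C m)" using iso_inv[OF assms(1)] by blast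
  have a: "m \<in> cArr C" using assms iso_arr by auto
  have "cComp C m' (cComp C m x) = x" using assms(2-5) m' a by (simp add: comp_reassoc[OF m'(4)])
  moreover have "cComp C m' (cComp C m y) = y" using assms(2-5) m' a by (simp add: comp_reassoc[OF m'(4)])
  ultimately show ?thesis using assms(6) by metis
qed

lemma iso_epi: assumes "iso C m" "x \<in> cArr C" "y \<in> cArr C" "cDom C x = cCod C m" "cDom C y = cCod C m"
  "cComp C x m = cComp C y m" shows "x = y"
proof -
  obtain m' where m': "m' \<in> cArr C" "cDom C m' = cCod C m" "cCod C m' = cDom C m"
    "cComp C m' m = cId C (cDom C m)" "cComp C m m' = cId C (cCod C m)" using iso_inv[OF assms(1)] by blast
  have a: "m \<in> cArr C" using assms iso_arr by auto
  have "cComp C x (cComp C m m') = x" using assms(2-5) m' a by simp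
  hence "cComp C (cComp C x m) m' = x" using assms(2-5) m' a by simp
  moreover have "cComp C y (cComp C m m') = y" using assms(2-5) m' a by simp
  hence "cComp C (cComp C y m) m' = y" using assms(2-5) m' a by simp
  ultimately show ?thesis using assms(6) by metis
qed

end


locale SMF = C: MC C + D: MC D for C :: "('o,'m) moncat" and D :: "('p,'n) moncat" +
  fixes F :: "('o,'m,'p,'n) mfun"
  assumes smf: "strong_monoidal_functor C D F"
begin
lemma isfun: "is_functor C D F" using smf by (simp add: strong_monoidal_functor_def)
lemma FO_obj[simp]: "a \<in> cObj C \<Longrightarrow> FO F a \<in> cObj D" using isfun by (simp add: is_functor_def)
lemma FA_arr[simp]: "f \<in> cArr C \<Longrightarrow> FA F f \<in> cArr D" using isfun by (simp add: is_functor_def)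
lemma FA_dom[simp]: "f \<in> cArr C \<Longrightarrow> cDom D (FA F f) = FO F (cDom C f)" using isfun by (simp add: is_functor_def)
lemma FA_cod[simp]: "f \<in> cArr C \<Longrightarrow> cCod D (FA F f) = FO F (cCod C f)" using isfun by (simp add: is_functor_def)
lemma FA_id[simp]: "a \<in> cObj C \<Longrightarrow> FA F (cId C a) = cId D (FO F a)" using isfun by (simp add: is_functor_def)
lemma FA_comp[simp]: "f \<in> cArr C \<Longrightarrow> g \<in> cArr C \<Longrightarrow> cCod C f = cDom C g \<Longrightarrow>
   FA F (cComp C g f) = cComp D (FA F g) (FA F f)" using isfun by (simp add: is_functor_def)
lemma Mu_arr[simp]: "a \<in> cObj C \<Longrightarrow> b \<in> cObj C \<Longrightarrow> Mu F a b \<in> cArr D"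
  using smf by (simp add: strong_monoidal_functor_def)
lemma Mu_dom[simp]: "a \<in> cObj C \<Longrightarrow> b \<in> cObj C \<Longrightarrow> cDom D (Mu F a b) = cTo D (FO F a) (FO F b)"
  using smf by (simp add: strong_monoidal_functor_def)
lemma Mu_cod[simp]: "a \<in> cObj C \<Longrightarrow> b \<in> cObj C \<Longrightarrow> cCod D (Mu F a b) = FO F (cTo C a b)"
  using smf by (simp add: strong_monoidal_functor_def)
lemma Mu_iso: "a \<in> cObj C \<Longrightarrow> b \<in> cObj C \<Longrightarrow> iso D (Mu F a b)"
  using smf by (simp add: strong_monoidal_functor_def)
lemma Mu_nat: "f \<in> cArr C \<Longrightarrow> g \<in> cArr C \<Longrightarrow>
          cComp D (Mu F (cCod C f) (cCod C g)) (cTa D (FA F f) (FA F g))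
        = cComp D (FA F (cTa C f g)) (Mu F (cDom C f) (cDom C g))"
  using smf by (simp add: strong_monoidal_functor_def)
lemma Eps_arr[simp]: "Eps F \<in> cArr D" using smf by (simp add: strong_monoidal_functor_def)
lemma Eps_dom[simp]: "cDom D (Eps F) = cUnit D" using smf by (simp add: strong_monoidal_functor_def)
lemma Eps_cod[simp]: "cCod D (Eps F) = FO F (cUnit C)" using smf by (simp add: strong_monoidal_functor_def)
lemma Eps_iso: "iso D (Eps F)" using smf by (simp add: strong_monoidal_functor_def)
lemma hexagon: "a \<in> cObj C \<Longrightarrow> b \<in> cObj C \<Longrightarrow> c \<in> cObj C \<Longrightarrow>
          cComp D (FA F (cAssoc C a b c))
            (cComp D (Mu F (cTo C a b) c) (cTa D (Mu F a b) (cId D (FO F c))))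
        = cComp D (Mu F a (cTo C b c))
            (cComp D (cTa D (cId D (FO F a)) (Mu F b c))
               (cAssoc D (FO F a) (FO F b) (FO F c)))"
  using smf by (simp add: strong_monoidal_functor_def)
lemma lunit: "a \<in> cObj C \<Longrightarrow>
          cComp D (FA F (cLunit C a))
            (cComp D (Mu F (cUnit C) a) (cTa D (Eps F) (cId D (FO F a))))
        = cLunit D (FO F a)"
  using smf by (simp add: strong_monoidal_functor_def)
lemma runit: "a \<in> cObj C \<Longrightarrow>
          cComp D (FA F (cRunit C a))
            (cComp D (Mu F a (cUnit C)) (cTa D (cId D (FO F a)) (Eps F)))
        = cRunit D (FO F a)"
  using smf by (simp add: strong_monoidal_functor_def)

lemma FA_iso: assumes "iso C f" shows "iso D (FA F f)"
proof -
  obtain g where g: "g \<in> cArr C" "cDom C g = cCod C f" "cCod C g = cDom C f"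
    "cComp C g f = cId C (cDom C f)" "cComp C f g = cId C (cCod C f)" using C.iso_inv[OF assms] by blast
  have a: "f \<in> cArr C" using assms C.iso_arr by auto
  have 1: "cComp D (FA F g) (FA F f) = cId D (FO F (cDom C f))"
    using a g FA_comp[of f g] by simp
  have 2: "cComp D (FA F f) (FA F g) = cId D (FO F (cCod C f))"
    using a g FA_comp[of g f] by simp
  show ?thesis unfolding iso_def
    apply (rule conjI) using a apply simp
    apply (rule bexI[of _ "FA F g"]) using 1 2 a g by auto
qed
end



locale Eqv = FF: SMF A B F + GG: SMF B A G
  for A :: "('a,'am) moncat" and B :: "('b,'bm) moncat" and F G +
  fixes \<eta> :: "'a \<Rightarrow> 'am" and \<epsilon> :: "'b \<Rightarrow> 'bm"
  assumes eta: "monoidal_nat_iso A A (mid A) (mcomp A F G) \<eta>"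
    and eps: "monoidal_nat_iso B B (mcomp B G F) (mid B) \<epsilon>"
begin

lemma eta_arr[simp]: "a \<in> cObj A \<Longrightarrow> \<eta> a \<in> cArr A"
  and eta_dom[simp]: "a \<in> cObj A \<Longrightarrow> cDom A (\<eta> a) = a"
  and eta_cod[simp]: "a \<in> cObj A \<Longrightarrow> cCod A (\<eta> a) = FO G (FO F a)"
  and eta_iso: "a \<in> cObj A \<Longrightarrow> iso A (\<eta> a)"
  using eta by (auto simp: monoidal_nat_iso_def mid_def mcomp_def)
lemma eta_nat: "f \<in> cArr A \<Longrightarrow> cComp A (\<eta> (cCod A f)) f = cComp A (FA G (FA F f)) (\<eta> (cDom A f))"
  using eta by (auto simp: monoidal_nat_iso_def mid_def mcomp_def)
lemma eps_arr[simp]: "b \<in> cObj B \<Longrightarrow> \<epsilon> b \<in> cArr B"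
  and eps_dom[simp]: "b \<in> cObj B \<Longrightarrow> cDom B (\<epsilon> b) = FO F (FO G b)"
  and eps_cod[simp]: "b \<in> cObj B \<Longrightarrow> cCod B (\<epsilon> b) = b"
  and eps_iso: "b \<in> cObj B \<Longrightarrow> iso B (\<epsilon> b)"
  using eps by (auto simp: monoidal_nat_iso_def mid_def mcomp_def)
lemma eps_nat: "g \<in> cArr B \<Longrightarrow> cComp B (\<epsilon> (cCod B g)) (FA F (FA G g)) = cComp B g (\<epsilon> (cDom B g))"
  using eps by (auto simp: monoidal_nat_iso_def mid_def mcomp_def)

lemma F_faithful: assumes "f \<in> cArr A" "f' \<in> cArr A" "cDom A f = cDom A f'" "cCod A f = cCod A f'"
  "FA F f = FA F f'" shows "f = f'"
proof (rule FF.C.iso_mono[OF eta_iso[of "cCod A f"]])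
  show "cComp A (\<eta> (cCod A f)) f = cComp A (\<eta> (cCod A f)) f'"
    using eta_nat[of f] eta_nat[of f'] assms by simp
qed (use assms in auto)

lemma G_faithful: assumes "g \<in> cArr B" "g' \<in> cArr B" "cDom B g = cDom B g'" "cCod B g = cCod B g'"
  "FA G g = FA G g'" shows "g = g'"
proof (rule FF.D.iso_epi[OF eps_iso[of "cDom B g"]])
  show "cComp B g (\<epsilon> (cDom B g)) = cComp B g' (\<epsilon> (cDom B g))"
    using eps_nat[of g] eps_nat[of g'] assms by simp
qed (use assms in auto)

lemma F_full: assumes "a \<in> cObj A" "a' \<in> cObj A" "h \<in> cArr B" "cDom B h = FO F a" "cCod B h = FO F a'"
  shows "\<exists>f. f \<in> cArr A \<and> cDom A f = a \<and> cCod A f = a' \<and> FA F f = h"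
proof -
  obtain k where k: "k \<in> cArr A" "cDom A k = FO G (FO F a')" "cCod A k = a'"
    "cComp A k (\<eta> a') = cId A a'" "cComp A (\<eta> a') k = cId A (FO G (FO F a'))"
    using FF.C.iso_inv[OF eta_iso[OF assms(2)]] assms by auto
  define f where "f = cComp A k (cComp A (FA G h) (\<eta> a))"
  have f: "f \<in> cArr A" "cDom A f = a" "cCod A f = a'" unfolding f_def using k assms by auto
  have "cComp A (FA G (FA F f)) (\<eta> a) = cComp A (\<eta> a') f"
    using eta_nat[of f] f by simp
  also have "\<dots> = cComp A (FA G h) (\<eta> a)" unfolding f_def
    using k(1-3) assms by (simp add: FF.C.comp_reassoc[OF k(5)])
  finally have "FA G (FA F f) = FA G h"
    by (rule FF.C.iso_epi[OF eta_iso[OF assms(1)], rotated -1]) (use f assms in auto)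
  hence "FA F f = h" by (rule G_faithful[rotated -1]) (use f assms in auto)
  thus ?thesis using f by blast
qed

lemma tens_chase:
  assumes f: "f \<in> cArr A" "cDom A f = a1" "cCod A f = a2"
    and f': "f' \<in> cArr A" "cDom A f' = a1'" "cCod A f' = a2'"
    and g: "g \<in> cArr B" "cDom B g = b1" "cCod B g = b2"
    and g': "g' \<in> cArr B" "cDom B g' = b1'" "cCod B g' = b2'"
    and p1: "p1 \<in> cArr B" "cDom B p1 = b1" "cCod B p1 = FO F a1"
    and p2: "p2 \<in> cArr B" "cDom B p2 = b2" "cCod B p2 = FO F a2"
    and q1: "q1 \<in> cArr B" "cDom B q1 = b1'" "cCod B q1 = FO F a1'"
    and q2: "q2 \<in> cArr B" "cDom B q2 = b2'" "cCod B q2 = FO F a2'"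
    and e1: "cComp B (FA F f) p1 = cComp B p2 g"
    and e2: "cComp B (FA F f') q1 = cComp B q2 g'"
  shows "cComp B (FA F (cTa A f f')) (cComp B (Mu F a1 a1') (cTa B p1 q1))
       = cComp B (cComp B (Mu F a2 a2') (cTa B p2 q2)) (cTa B g g')"
proof -
  have o: "a1 \<in> cObj A" "a2 \<in> cObj A" "a1' \<in> cObj A" "a2' \<in> cObj A"
    using f f' by (metis FF.C.dom_obj FF.C.cod_obj)+
  have n: "cComp B (Mu F a2 a2') (cTa B (FA F f) (FA F f')) = cComp B (FA F (cTa A f f')) (Mu F a1 a1')"
    using FF.Mu_nat[of f f'] f f' by simp
  have "cComp B (FA F (cTa A f f')) (cComp B (Mu F a1 a1') (cTa B p1 q1))
      = cComp B (Mu F a2 a2') (cComp B (cTa B (FA F f) (FA F f')) (cTa B p1 q1))"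
    using o f f' p1 q1 by (simp add: FF.D.comp_reassoc[OF n[symmetric]])
  also have "\<dots> = cComp B (Mu F a2 a2') (cTa B (cComp B (FA F f) p1) (cComp B (FA F f') q1))"
    using o f f' p1 q1 by (simp add: FF.D.interchange)
  also have "\<dots> = cComp B (Mu F a2 a2') (cTa B (cComp B p2 g) (cComp B q2 g'))"
    using e1 e2 by simp
  also have "\<dots> = cComp B (cComp B (Mu F a2 a2') (cTa B p2 q2)) (cTa B g g')"
    using o f f' p2 q2 g g' by (simp add: FF.D.interchange)
  finally show ?thesis .
qed

lemma assoc_chase:
  assumes a: "a \<in> cObj A" "a' \<in> cObj A" "a'' \<in> cObj A"
    and p: "p \<in> cArr B" "cDom B p = b" "cCod B p = FO F a"
    and p': "p' \<in> cArr B" "cDom B p' = b'" "cCod B p' = FO F a'"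
    and p'': "p'' \<in> cArr B" "cDom B p'' = b''" "cCod B p'' = FO F a''"
  shows "cComp B (FA F (cAssoc A a a' a'')) (cComp B (Mu F (cTo A a a') a'') (cTa B (cComp B (Mu F a a') (cTa B p p')) p''))
       = cComp B (cComp B (Mu F a (cTo A a' a'')) (cTa B p (cComp B (Mu F a' a'') (cTa B p' p'')))) (cAssoc B b b' b'')"
proof -
  have b: "b \<in> cObj B" "b' \<in> cObj B" "b'' \<in> cObj B" using p p' p'' by (metis FF.D.dom_obj)+
  have t1: "cTa B (cComp B (Mu F a a') (cTa B p p')) p'' = cComp B (cTa B (Mu F a a') (cId B (FO F a''))) (cTa B (cTa B p p') p'')"
    using FF.D.interchange[of "cTa B p p'" "Mu F a a'" p'' "cId B (FO F a'')"] a p p' p'' by simp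
  have t2: "cTa B p (cComp B (Mu F a' a'') (cTa B p' p'')) = cComp B (cTa B (cId B (FO F a)) (Mu F a' a'')) (cTa B p (cTa B p' p''))"
    using FF.D.interchange[of p "cId B (FO F a)" "cTa B p' p''" "Mu F a' a''"] a p p' p'' by simp
  have hex: "cComp B (FA F (cAssoc A a a' a'')) (cComp B (Mu F (cTo A a a') a'') (cTa B (Mu F a a') (cId B (FO F a''))))
        = cComp B (Mu F a (cTo A a' a'')) (cComp B (cTa B (cId B (FO F a)) (Mu F a' a'')) (cAssoc B (FO F a) (FO F a') (FO F a'')))"
    using FF.hexagon a by simp
  have nat: "cComp B (cAssoc B (FO F a) (FO F a') (FO F a'')) (cTa B (cTa B p p') p'') = cComp B (cTa B p (cTa B p' p'')) (cAssoc B b b' b'')"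
    using FF.D.assoc_nat[of p p' p''] p p' p'' by simp
  show ?thesis
    apply (simp add: t1 t2)
    using a b p p' p'' apply (simp add: FF.D.comp_reassoc3[OF hex] FF.D.comp_reassoc[OF nat] nat)
    done
qed

lemma lunit_chase:
  assumes a: "a \<in> cObj A" and p: "p \<in> cArr B" "cDom B p = b" "cCod B p = FO F a"
  shows "cComp B (FA F (cLunit A a)) (cComp B (Mu F (cUnit A) a) (cTa B (Eps F) p)) = cComp B p (cLunit B b)"
proof -
  have b: "b \<in> cObj B" using p by (metis FF.D.dom_obj)
  have t: "cTa B (Eps F) p = cComp B (cTa B (Eps F) (cId B (FO F a))) (cTa B (cId B (cUnit B)) p)"
    using FF.D.interchange[of "cId B (cUnit B)" "Eps F" p "cId B (FO F a)"] a p by simp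
  have u: "cComp B (FA F (cLunit A a)) (cComp B (Mu F (cUnit A) a) (cTa B (Eps F) (cId B (FO F a)))) = cLunit B (FO F a)"
    using FF.lunit a by simp
  have nat: "cComp B (cLunit B (FO F a)) (cTa B (cId B (cUnit B)) p) = cComp B p (cLunit B b)"
    using FF.D.lunit_nat[of p] p by simp
  show ?thesis
    apply (simp add: t)
    using a b p apply (simp add: FF.D.comp_reassoc3[OF u] nat)
    done
qed

lemma runit_chase:
  assumes a: "a \<in> cObj A" and p: "p \<in> cArr B" "cDom B p = b" "cCod B p = FO F a"
  shows "cComp B (FA F (cRunit A a)) (cComp B (Mu F a (cUnit A)) (cTa B p (Eps F))) = cComp B p (cRunit B b)"
proof -
  have b: "b \<in> cObj B" using p by (metis FF.D.dom_obj)
  have t: "cTa B p (Eps F) = cComp B (cTa B (cId B (FO F a)) (Eps F)) (cTa B p (cId B (cUnit B)))"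
    using FF.D.interchange[of p "cId B (FO F a)" "cId B (cUnit B)" "Eps F"] a p by simp
  have u: "cComp B (FA F (cRunit A a)) (cComp B (Mu F a (cUnit A)) (cTa B (cId B (FO F a)) (Eps F))) = cRunit B (FO F a)"
    using FF.runit a by simp
  have nat: "cComp B (cRunit B (FO F a)) (cTa B p (cId B (cUnit B))) = cComp B p (cRunit B b)"
    using FF.D.runit_nat[of p] p by simp
  show ?thesis
    apply (simp add: t)
    using a b p apply (simp add: FF.D.comp_reassoc3[OF u] nat)
    done
qed

end


definition Cobj :: "('a,'am) moncat \<Rightarrow> ('b,'bm) moncat \<Rightarrow> ('a,'am,'b,'bm) mfun \<Rightarrow> ('a \<times> 'b \<times> 'bm) set" where
  "Cobj A B F = {X. fst X \<in> cObj A \<and> fst (snd X) \<in> cObj B \<and> snd (snd X) \<in> hom B (fst (snd X)) (FO F (fst X))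
                  \<and> iso B (snd (snd X))}"

definition Carr :: "('a,'am) moncat \<Rightarrow> ('b,'bm) moncat \<Rightarrow> ('a,'am,'b,'bm) mfun \<Rightarrow>
   (('a \<times> 'b \<times> 'bm) \<times> ('am \<times> 'bm) \<times> ('a \<times> 'b \<times> 'bm)) set" where
  "Carr A B F = {x. fst x \<in> Cobj A B F \<and> snd (snd x) \<in> Cobj A B F
      \<and> fst (fst (snd x)) \<in> hom A (fst (fst x)) (fst (snd (snd x)))
      \<and> snd (fst (snd x)) \<in> hom B (fst (snd (fst x))) (fst (snd (snd (snd x))))
      \<and> cComp B (FA F (fst (fst (snd x)))) (snd (snd (fst x))) = cComp B (snd (snd (snd (snd x)))) (snd (fst (snd x)))}"

definition tO :: "('a,'am) moncat \<Rightarrow> ('b,'bm) moncat \<Rightarrow> ('a,'am,'b,'bm) mfun \<Rightarrow> ('a \<times> 'b \<times> 'bm) \<Rightarrow> ('a \<times> 'b \<times> 'bm) \<Rightarrow> ('a \<times> 'b \<times> 'bm)" where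
  "tO A B F X Y = (cTo A (fst X) (fst Y), cTo B (fst (snd X)) (fst (snd Y)),
      cComp B (Mu F (fst X) (fst Y)) (cTa B (snd (snd X)) (snd (snd Y))))"

definition CC :: "('a,'am) moncat \<Rightarrow> ('b,'bm) moncat \<Rightarrow> ('a,'am,'b,'bm) mfun \<Rightarrow>
   ('a \<times> 'b \<times> 'bm, ('a \<times> 'b \<times> 'bm) \<times> ('am \<times> 'bm) \<times> ('a \<times> 'b \<times> 'bm)) moncat" where
  "CC A B F = \<lparr>cObj = Cobj A B F, cArr = Carr A B F, cDom = fst, cCod = (\<lambda>x. snd (snd x)),
     cId = (\<lambda>X. (X, (cId A (fst X), cId B (fst (snd X))), X)),
     cComp = (\<lambda>y x. (fst x, (cComp A (fst (fst (snd y))) (fst (fst (snd x))), cComp B (snd (fst (snd y))) (snd (fst (snd x)))), snd (snd y))),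
     cTo = tO A B F,
     cTa = (\<lambda>x y. (tO A B F (fst x) (fst y), (cTa A (fst (fst (snd x))) (fst (fst (snd y))), cTa B (snd (fst (snd x))) (snd (fst (snd y)))),
                  tO A B F (snd (snd x)) (snd (snd y)))),
     cUnit = (cUnit A, cUnit B, Eps F),
     cAssoc = (\<lambda>X Y Z. (tO A B F (tO A B F X Y) Z, (cAssoc A (fst X) (fst Y) (fst Z), cAssoc B (fst (snd X)) (fst (snd Y)) (fst (snd Z))),
                  tO A B F X (tO A B F Y Z))),
     cLunit = (\<lambda>X. (tO A B F (cUnit A, cUnit B, Eps F) X, (cLunit A (fst X), cLunit B (fst (snd X))), X)),
     cRunit = (\<lambda>X. (tO A B F X (cUnit A, cUnit B, Eps F), (cRunit A (fst X), cRunit B (fst (snd X))), X))\<rparr>"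

definition PP :: "('a,'am) moncat \<Rightarrow> ('a \<times> 'b \<times> 'bm, ('a \<times> 'b \<times> 'bm) \<times> ('am \<times> 'bm) \<times> ('a \<times> 'b \<times> 'bm), 'a, 'am) mfun" where
  "PP A = \<lparr>FO = fst, FA = (\<lambda>x. fst (fst (snd x))), Mu = (\<lambda>X Y. cId A (cTo A (fst X) (fst Y))), Eps = cId A (cUnit A)\<rparr>"

definition QQ :: "('b,'bm) moncat \<Rightarrow> ('a \<times> 'b \<times> 'bm, ('a \<times> 'b \<times> 'bm) \<times> ('am \<times> 'bm) \<times> ('a \<times> 'b \<times> 'bm), 'b, 'bm) mfun" where
  "QQ B = \<lparr>FO = (\<lambda>X. fst (snd X)), FA = (\<lambda>x. snd (fst (snd x))), Mu = (\<lambda>X Y. cId B (cTo B (fst (snd X)) (fst (snd Y)))), Eps = cId B (cUnit B)\<rparr>"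

context Eqv begin

abbreviation "C \<equiv> CC A B F"

lemma C_sel[simp]: "cObj C = Cobj A B F" "cArr C = Carr A B F" "cDom C = fst" "cCod C = (\<lambda>x. snd (snd x))"
  "cId C X = (X, (cId A (fst X), cId B (fst (snd X))), X)"
  "cComp C y x = (fst x, (cComp A (fst (fst (snd y))) (fst (fst (snd x))), cComp B (snd (fst (snd y))) (snd (fst (snd x)))), snd (snd y))"
  "cTo C = tO A B F"
  "cTa C x y = (tO A B F (fst x) (fst y), (cTa A (fst (fst (snd x))) (fst (fst (snd y))), cTa B (snd (fst (snd x))) (snd (fst (snd y)))),
                  tO A B F (snd (snd x)) (snd (snd y)))"
  "cUnit C = (cUnit A, cUnit B, Eps F)"
  "cAssoc C X Y Z = (tO A B F (tO A B F X Y) Z, (cAssoc A (fst X) (fst Y) (fst Z), cAssoc B (fst (snd X)) (fst (snd Y)) (fst (snd Z))),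
                  tO A B F X (tO A B F Y Z))"
  "cLunit C X = (tO A B F (cUnit A, cUnit B, Eps F) X, (cLunit A (fst X), cLunit B (fst (snd X))), X)"
  "cRunit C X = (tO A B F X (cUnit A, cUnit B, Eps F), (cRunit A (fst X), cRunit B (fst (snd X))), X)"
  by (simp_all add: CC_def)

lemma tO_simp[simp]: "tO A B F (a,b,p) (a',b',p') = (cTo A a a', cTo B b b', cComp B (Mu F a a') (cTa B p p'))"
  by (simp add: tO_def)

lemma obj_mem[simp]: "(a,b,p) \<in> Cobj A B F \<longleftrightarrow> a \<in> cObj A \<and> b \<in> cObj B \<and> p \<in> cArr B \<and> cDom B p = b \<and> cCod B p = FO F a \<and> iso B p"
  by (auto simp: Cobj_def)

lemma arr_mem[simp]: "((a,b,p),(f,g),(a',b',p')) \<in> Carr A B F \<longleftrightarrow> (a,b,p) \<in> Cobj A B F \<and> (a',b',p') \<in> Cobj A B F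
   \<and> f \<in> cArr A \<and> cDom A f = a \<and> cCod A f = a' \<and> g \<in> cArr B \<and> cDom B g = b \<and> cCod B g = b'
   \<and> cComp B (FA F f) p = cComp B p' g"
  by (simp add: Carr_def)

lemma ball_obj: "(\<forall>X\<in>Cobj A B F. P X) \<longleftrightarrow> (\<forall>a b p. (a,b,p) \<in> Cobj A B F \<longrightarrow> P (a,b,p))"
  by auto
lemma ball_arr: "(\<forall>x\<in>Carr A B F. P x) \<longleftrightarrow> (\<forall>a b p f g a' b' p'. ((a,b,p),(f,g),(a',b',p')) \<in> Carr A B F \<longrightarrow> P ((a,b,p),(f,g),(a',b',p')))"
  by auto

lemma to_mem: "(a,b,p) \<in> Cobj A B F \<Longrightarrow> (a',b',p') \<in> Cobj A B F \<Longrightarrow> tO A B F (a,b,p) (a',b',p') \<in> Cobj A B F"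
  by (auto intro!: FF.D.iso_comp FF.D.iso_ta FF.Mu_iso)

lemma unit_mem: "(cUnit A, cUnit B, Eps F) \<in> Cobj A B F"
  by (simp add: FF.Eps_iso)

lemma comp_mem:
  assumes "((a,b,p),(f,g),(a',b',p')) \<in> Carr A B F" "((a',b',p'),(f',g'),(a'',b'',p'')) \<in> Carr A B F"
  shows "((a,b,p),(cComp A f' f, cComp B g' g),(a'',b'',p'')) \<in> Carr A B F"
proof -
  have h: "(a,b,p) \<in> Cobj A B F" "(a',b',p') \<in> Cobj A B F" "(a'',b'',p'') \<in> Cobj A B F"
    "f \<in> cArr A" "cDom A f = a" "cCod A f = a'" "g \<in> cArr B" "cDom B g = b" "cCod B g = b'"
    "f' \<in> cArr A" "cDom A f' = a'" "cCod A f' = a''" "g' \<in> cArr B" "cDom B g' = b'" "cCod B g' = b''"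
    and e1: "cComp B (FA F f) p = cComp B p' g" and e2: "cComp B (FA F f') p' = cComp B p'' g'"
    using assms by simp_all
  have "cComp B (FA F (cComp A f' f)) p = cComp B (FA F f') (cComp B (FA F f) p)" using h by simp
  also have "\<dots> = cComp B (FA F f') (cComp B p' g)" using e1 by simp
  also have "\<dots> = cComp B (cComp B (FA F f') p') g" using h by simp
  also have "\<dots> = cComp B (cComp B p'' g') g" using e2 by simp
  also have "\<dots> = cComp B p'' (cComp B g' g)" using h by simp
  finally show ?thesis using h by simp
qed

lemma C_category: "category C"
  unfolding category_def C_sel
  apply (intro conjI)
  subgoal by (simp add: Carr_def)
  subgoal by (simp add: ball_obj)
  subgoal apply (simp only: ball_arr) apply (intro allI impI) apply (simp only: in_hom)
    apply (rule conjI)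
    subgoal by (clarsimp simp del: arr_mem simp: comp_mem)
    by simp
  subgoal by (auto simp: ball_arr)
  subgoal by (auto simp: ball_arr)
  done

lemma iso_C:
  assumes x: "((a,b,p),(f,g),(a',b',p')) \<in> Carr A B F" and i: "iso A f" "iso B g"
  shows "iso C ((a,b,p),(f,g),(a',b',p'))"
proof -
  have h: "(a,b,p) \<in> Cobj A B F" "(a',b',p') \<in> Cobj A B F"
    "f \<in> cArr A" "cDom A f = a" "cCod A f = a'" "g \<in> cArr B" "cDom B g = b" "cCod B g = b'"
    and e: "cComp B (FA F f) p = cComp B p' g" using x by simp_all
  have o: "a \<in> cObj A" "a' \<in> cObj A" "b \<in> cObj B" "b' \<in> cObj B" "p \<in> cArr B" "p' \<in> cArr B"
    "cDom B p = b" "cCod B p = FO F a" "cDom B p' = b'" "cCod B p' = FO F a'" using h by auto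
  obtain f' where f': "f' \<in> cArr A" "cDom A f' = a'" "cCod A f' = a"
    "cComp A f' f = cId A a" "cComp A f f' = cId A a'" using FF.C.iso_inv[OF i(1)] h by auto
  obtain g' where g': "g' \<in> cArr B" "cDom B g' = b'" "cCod B g' = b"
    "cComp B g' g = cId B b" "cComp B g g' = cId B b'" using FF.D.iso_inv[OF i(2)] h by auto
  have Ff: "cComp B (FA F f') (FA F f) = cId B (FO F a)"
    using FF.FA_comp[of f f'] f' h o by simp
  have e': "cComp B (FA F f') p' = cComp B p g'"
  proof (rule FF.D.iso_epi[OF i(2)])
    have "cComp B (cComp B (FA F f') p') g = cComp B (FA F f') (cComp B p' g)" using o h f' by simp
    also have "\<dots> = cComp B (FA F f') (cComp B (FA F f) p)" using e by simp
    also have "\<dots> = p" using o h f' by (simp add: FF.D.comp_reassoc[OF Ff])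
    also have "\<dots> = cComp B (cComp B p g') g" using o h g' by (simp add: g'(4))
    finally show "cComp B (cComp B (FA F f') p') g = cComp B (cComp B p g') g" .
  qed (use o h f' g' in auto)
  have y: "((a',b',p'),(f',g'),(a,b,p)) \<in> Carr A B F" using h f' g' e' by simp
  show ?thesis unfolding iso_def
    apply (rule conjI) using x apply simp
    apply (rule bexI[of _ "((a',b',p'),(f',g'),(a,b,p))"]) using y f' g' h by auto
qed

lemma iso_C': assumes "x \<in> Carr A B F" "iso A (fst (fst (snd x)))" "iso B (snd (fst (snd x)))" shows "iso C x"
proof -
  obtain a b p f g a' b' p' where "x = ((a,b,p),(f,g),(a',b',p'))" by (metis prod.collapse)
  thus ?thesis using assms iso_C[of a b p f g a' b' p'] by (simp del: arr_mem)
qed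

lemma tens_mem:
  assumes x: "((a1,b1,p1),(f,g),(a2,b2,p2)) \<in> Carr A B F" and y: "((a1',b1',q1),(f',g'),(a2',b2',q2)) \<in> Carr A B F"
  shows "(tO A B F (a1,b1,p1) (a1',b1',q1), (cTa A f f', cTa B g g'), tO A B F (a2,b2,p2) (a2',b2',q2)) \<in> Carr A B F"
proof -
  have h: "(a1,b1,p1) \<in> Cobj A B F" "(a2,b2,p2) \<in> Cobj A B F" "(a1',b1',q1) \<in> Cobj A B F" "(a2',b2',q2) \<in> Cobj A B F"
    using x y by simp_all
  have t: "tO A B F (a1,b1,p1) (a1',b1',q1) \<in> Cobj A B F" "tO A B F (a2,b2,p2) (a2',b2',q2) \<in> Cobj A B F"
    using to_mem h by blast+
  have c: "cComp B (FA F (cTa A f f')) (cComp B (Mu F a1 a1') (cTa B p1 q1))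
       = cComp B (cComp B (Mu F a2 a2') (cTa B p2 q2)) (cTa B g g')"
    by (rule tens_chase) (use x y in simp_all)
  show ?thesis using t c x y by (simp del: obj_mem)
qed

lemma assoc_mem:
  assumes X: "(a,b,p) \<in> Cobj A B F" and Y: "(a',b',p') \<in> Cobj A B F" and Z: "(a'',b'',p'') \<in> Cobj A B F"
  shows "(tO A B F (tO A B F (a,b,p) (a',b',p')) (a'',b'',p''), (cAssoc A a a' a'', cAssoc B b b' b''),
          tO A B F (a,b,p) (tO A B F (a',b',p') (a'',b'',p''))) \<in> Carr A B F"
proof -
  have t: "tO A B F (tO A B F (a,b,p) (a',b',p')) (a'',b'',p'') \<in> Cobj A B F"
     "tO A B F (a,b,p) (tO A B F (a',b',p') (a'',b'',p'')) \<in> Cobj A B F"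
    using to_mem X Y Z by (metis tO_simp)+
  have c: "cComp B (FA F (cAssoc A a a' a'')) (cComp B (Mu F (cTo A a a') a'') (cTa B (cComp B (Mu F a a') (cTa B p p')) p''))
       = cComp B (cComp B (Mu F a (cTo A a' a'')) (cTa B p (cComp B (Mu F a' a'') (cTa B p' p'')))) (cAssoc B b b' b'')"
    by (rule assoc_chase) (use X Y Z in simp_all)
  show ?thesis using t c X Y Z by (simp del: obj_mem) (use X Y Z in simp)
qed

lemma lunit_mem:
  assumes X: "(a,b,p) \<in> Cobj A B F"
  shows "(tO A B F (cUnit A, cUnit B, Eps F) (a,b,p), (cLunit A a, cLunit B b), (a,b,p)) \<in> Carr A B F"
proof -
  have t: "tO A B F (cUnit A, cUnit B, Eps F) (a,b,p) \<in> Cobj A B F"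
    using to_mem unit_mem X by blast
  have c: "cComp B (FA F (cLunit A a)) (cComp B (Mu F (cUnit A) a) (cTa B (Eps F) p)) = cComp B p (cLunit B b)"
    by (rule lunit_chase) (use X in simp_all)
  show ?thesis using t c X by (simp del: obj_mem) (use X in simp)
qed

lemma runit_mem:
  assumes X: "(a,b,p) \<in> Cobj A B F"
  shows "(tO A B F (a,b,p) (cUnit A, cUnit B, Eps F), (cRunit A a, cRunit B b), (a,b,p)) \<in> Carr A B F"
proof -
  have t: "tO A B F (a,b,p) (cUnit A, cUnit B, Eps F) \<in> Cobj A B F"
    using to_mem unit_mem X by blast
  have c: "cComp B (FA F (cRunit A a)) (cComp B (Mu F a (cUnit A)) (cTa B p (Eps F))) = cComp B p (cRunit B b)"
    by (rule runit_chase) (use X in simp_all)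
  show ?thesis using t c X by (simp del: obj_mem) (use X in simp)
qed

lemma assoc_nat_C:
  assumes x: "((a1,b1,p1),(f,g),(a2,b2,p2)) \<in> Carr A B F" and y: "((a1',b1',p1'),(f',g'),(a2',b2',p2')) \<in> Carr A B F"
    and z: "((a1'',b1'',p1''),(f'',g''),(a2'',b2'',p2'')) \<in> Carr A B F"
  shows "cComp C (cAssoc C (cCod C ((a1,b1,p1),(f,g),(a2,b2,p2))) (cCod C ((a1',b1',p1'),(f',g'),(a2',b2',p2'))) (cCod C ((a1'',b1'',p1''),(f'',g''),(a2'',b2'',p2''))))
      (cTa C (cTa C ((a1,b1,p1),(f,g),(a2,b2,p2)) ((a1',b1',p1'),(f',g'),(a2',b2',p2'))) ((a1'',b1'',p1''),(f'',g''),(a2'',b2'',p2'')))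
    = cComp C (cTa C ((a1,b1,p1),(f,g),(a2,b2,p2)) (cTa C ((a1',b1',p1'),(f',g'),(a2',b2',p2')) ((a1'',b1'',p1''),(f'',g''),(a2'',b2'',p2''))))
      (cAssoc C (cDom C ((a1,b1,p1),(f,g),(a2,b2,p2))) (cDom C ((a1',b1',p1'),(f',g'),(a2',b2',p2'))) (cDom C ((a1'',b1'',p1''),(f'',g''),(a2'',b2'',p2''))))"
  using FF.C.assoc_nat[of f f' f''] FF.D.assoc_nat[of g g' g''] x y z by simp

lemma lunit_nat_C:
  assumes x: "((a1,b1,p1),(f,g),(a2,b2,p2)) \<in> Carr A B F"
  shows "cComp C (cLunit C (cCod C ((a1,b1,p1),(f,g),(a2,b2,p2)))) (cTa C (cId C (cUnit C)) ((a1,b1,p1),(f,g),(a2,b2,p2)))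
                  = cComp C ((a1,b1,p1),(f,g),(a2,b2,p2)) (cLunit C (cDom C ((a1,b1,p1),(f,g),(a2,b2,p2))))"
  using FF.C.lunit_nat[of f] FF.D.lunit_nat[of g] x by simp

lemma runit_nat_C:
  assumes x: "((a1,b1,p1),(f,g),(a2,b2,p2)) \<in> Carr A B F"
  shows "cComp C (cRunit C (cCod C ((a1,b1,p1),(f,g),(a2,b2,p2)))) (cTa C ((a1,b1,p1),(f,g),(a2,b2,p2)) (cId C (cUnit C)))
                  = cComp C ((a1,b1,p1),(f,g),(a2,b2,p2)) (cRunit C (cDom C ((a1,b1,p1),(f,g),(a2,b2,p2))))"
  using FF.C.runit_nat[of f] FF.D.runit_nat[of g] x by simp

lemma pentagon_C:
  assumes "(a,b,p) \<in> Cobj A B F" "(a',b',p') \<in> Cobj A B F" "(a'',b'',p'') \<in> Cobj A B F" "(a3,b3,p3) \<in> Cobj A B F"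
  shows "cComp C (cAssoc C (a,b,p) (a',b',p') (cTo C (a'',b'',p'') (a3,b3,p3))) (cAssoc C (cTo C (a,b,p) (a',b',p')) (a'',b'',p'') (a3,b3,p3))
        = cComp C (cTa C (cId C (a,b,p)) (cAssoc C (a',b',p') (a'',b'',p'') (a3,b3,p3)))
            (cComp C (cAssoc C (a,b,p) (cTo C (a',b',p') (a'',b'',p'')) (a3,b3,p3)) (cTa C (cAssoc C (a,b,p) (a',b',p') (a'',b'',p'')) (cId C (a3,b3,p3))))"
  using FF.C.pentagon[of a a' a'' a3] FF.D.pentagon[of b b' b'' b3] assms by simp

lemma triangle_C:
  assumes "(a,b,p) \<in> Cobj A B F" "(a',b',p') \<in> Cobj A B F"
  shows "cComp C (cTa C (cId C (a,b,p)) (cLunit C (a',b',p'))) (cAssoc C (a,b,p) (cUnit C) (a',b',p'))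
        = cTa C (cRunit C (a,b,p)) (cId C (a',b',p'))"
  using FF.C.triangle[of a a'] FF.D.triangle[of b b'] assms by simp

lemma C_monoidal: "monoidal_category C"
  unfolding monoidal_category_def
  apply (intro conjI)
  subgoal by (rule C_category)
  subgoal unfolding C_sel ball_obj by (blast intro: to_mem)
  subgoal unfolding C_sel ball_arr in_hom
    by (intro allI impI conjI) (simp_all only: tens_mem C_sel fst_conv snd_conv)
  subgoal unfolding C_sel by (auto simp: ball_obj)
  subgoal unfolding C_sel by (auto simp: ball_arr FF.C.interchange FF.D.interchange)
  subgoal using unit_mem by simp
  subgoal unfolding C_sel ball_obj in_hom
    apply (intro allI impI conjI)
    subgoal by (simp only: assoc_mem fst_conv snd_conv)
       apply simp apply simp
    apply (rule iso_C')
    by (simp_all only: assoc_mem fst_conv snd_conv) (simp_all add: FF.C.assoc_iso FF.D.assoc_iso)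
  subgoal unfolding C_sel(1,2) ball_arr by (intro allI impI) (rule assoc_nat_C; assumption)
  subgoal unfolding C_sel ball_obj in_hom
    apply (intro allI impI conjI)
    subgoal by (simp only: lunit_mem fst_conv snd_conv)
       apply simp apply simp
    apply (rule iso_C')
    by (simp_all only: lunit_mem fst_conv snd_conv) (simp_all add: FF.C.lunit_iso FF.D.lunit_iso)
  subgoal unfolding C_sel ball_obj in_hom
    apply (intro allI impI conjI)
    subgoal by (simp only: runit_mem fst_conv snd_conv)
       apply simp apply simp
    apply (rule iso_C')
    by (simp_all only: runit_mem fst_conv snd_conv) (simp_all add: FF.C.runit_iso FF.D.runit_iso)
  subgoal unfolding C_sel(1,2) ball_arr by (intro allI impI) (rule lunit_nat_C; assumption)
  subgoal unfolding C_sel(1,2) ball_arr by (intro allI impI) (rule runit_nat_C; assumption)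
  subgoal unfolding C_sel(1,2) ball_obj by (intro allI impI) (rule pentagon_C; assumption)
  subgoal unfolding C_sel(1,2) ball_obj by (intro allI impI) (rule triangle_C; assumption)
  done

lemma PP_sel[simp]: "FO (PP A) = fst" "FA (PP A) x = fst (fst (snd x))" "Mu (PP A) X Y = cId A (cTo A (fst X) (fst Y))" "Eps (PP A) = cId A (cUnit A)"
  by (simp_all add: PP_def)
lemma QQ_sel[simp]: "FO (QQ B) = (\<lambda>X. fst (snd X))" "FA (QQ B) x = snd (fst (snd x))" "Mu (QQ B) X Y = cId B (cTo B (fst (snd X)) (fst (snd Y)))" "Eps (QQ B) = cId B (cUnit B)"
  by (simp_all add: QQ_def)

lemma P_functor: "is_functor C A (PP A)"
  unfolding is_functor_def C_sel(1,2) ball_obj ball_arr by auto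

lemma Q_functor: "is_functor C B (QQ B)"
  unfolding is_functor_def C_sel(1,2) ball_obj ball_arr by auto

lemma P_strict: "strict_monoidal_functor C A (PP A)"
  unfolding strict_monoidal_functor_def strong_monoidal_functor_def
  apply (intro conjI)
  apply (rule C_monoidal) apply (rule FF.C.mc) apply (rule P_functor)
  subgoal unfolding C_sel(1,2) ball_obj by (auto simp: FF.C.iso_id)
  subgoal unfolding C_sel(1,2) ball_arr by auto
  subgoal by simp
  subgoal by (simp add: FF.C.iso_id)
  subgoal unfolding C_sel(1,2) ball_obj by auto
  subgoal unfolding C_sel(1,2) ball_obj by auto
  subgoal unfolding C_sel(1,2) ball_obj by auto
  subgoal unfolding C_sel(1,2) ball_obj by auto
  by simp_all

lemma Q_strict: "strict_monoidal_functor C B (QQ B)"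
  unfolding strict_monoidal_functor_def strong_monoidal_functor_def
  apply (intro conjI)
  apply (rule C_monoidal) apply (rule FF.D.mc) apply (rule Q_functor)
  subgoal unfolding C_sel(1,2) ball_obj by (auto simp: FF.D.iso_id)
  subgoal unfolding C_sel(1,2) ball_arr by auto
  subgoal by simp
  subgoal by (simp add: FF.D.iso_id)
  subgoal unfolding C_sel(1,2) ball_obj by auto
  subgoal unfolding C_sel(1,2) ball_obj by auto
  subgoal unfolding C_sel(1,2) ball_obj by auto
  subgoal unfolding C_sel(1,2) ball_obj by auto
  by simp_all

lemma P_surjeq: "surjective_equivalence C A (PP A)"
  unfolding surjective_equivalence_def
proof (intro conjI)
  show "is_functor C A (PP A)" by (rule P_functor)
  show "\<forall>b\<in>cObj A. \<exists>a\<in>cObj C. FO (PP A) a = b"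
  proof
    fix a assume a: "a \<in> cObj A"
    have "(a, FO F a, cId B (FO F a)) \<in> cObj C" using a by (simp add: FF.D.iso_id)
    thus "\<exists>X\<in>cObj C. FO (PP A) X = a" by (intro bexI[of _ "(a, FO F a, cId B (FO F a))"]) simp_all
  qed
  show "\<forall>a\<in>cObj C. \<forall>b\<in>cObj C. \<forall>g\<in>hom A (FO (PP A) a) (FO (PP A) b). \<exists>f\<in>hom C a b. FA (PP A) f = g"
    unfolding C_sel(1) ball_obj
  proof (intro allI impI ballI)
    fix a b p a' b' p' f
    assume X: "(a,b,p) \<in> Cobj A B F" and Y: "(a',b',p') \<in> Cobj A B F" and f: "f \<in> hom A (FO (PP A) (a,b,p)) (FO (PP A) (a',b',p'))"
    have h: "a \<in> cObj A" "b \<in> cObj B" "p \<in> cArr B" "cDom B p = b" "cCod B p = FO F a" "iso B p"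
      "a' \<in> cObj A" "b' \<in> cObj B" "p' \<in> cArr B" "cDom B p' = b'" "cCod B p' = FO F a'" "iso B p'"
      "f \<in> cArr A" "cDom A f = a" "cCod A f = a'" using X Y f by auto
    obtain q where q: "q \<in> cArr B" "cDom B q = FO F a'" "cCod B q = b'"
      "cComp B q p' = cId B b'" "cComp B p' q = cId B (FO F a')" using FF.D.iso_inv[OF h(12)] h by auto
    define g where "g = cComp B q (cComp B (FA F f) p)"
    have g: "g \<in> cArr B" "cDom B g = b" "cCod B g = b'" unfolding g_def using h q by auto
    have e: "cComp B (FA F f) p = cComp B p' g" unfolding g_def using h q
      by (simp add: FF.D.comp_reassoc[OF q(5)])
    have "((a,b,p),(f,g),(a',b',p')) \<in> cArr C" using X Y h g e by simp
    thus "\<exists>x\<in>hom C (a,b,p) (a',b',p'). FA (PP A) x = f"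
      by (intro bexI[of _ "((a,b,p),(f,g),(a',b',p'))"]) (simp_all del: arr_mem C_sel add: C_sel(3,4))
  qed
  show "\<forall>a\<in>cObj C. \<forall>b\<in>cObj C. \<forall>f\<in>hom C a b. \<forall>f'\<in>hom C a b. FA (PP A) f = FA (PP A) f' \<longrightarrow> f = f'"
    unfolding C_sel(1) ball_obj
  proof (intro allI impI ballI)
    fix a b p a' b' p' x x'
    assume X: "(a,b,p) \<in> Cobj A B F" and Y: "(a',b',p') \<in> Cobj A B F"
      and x: "x \<in> hom C (a,b,p) (a',b',p')" and x': "x' \<in> hom C (a,b,p) (a',b',p')" and eq: "FA (PP A) x = FA (PP A) x'"
    obtain f g where xe: "x = ((a,b,p),(f,g),(a',b',p'))" using x by (cases x) auto
    obtain f' g' where xe': "x' = ((a,b,p),(f',g'),(a',b',p'))" using x' by (cases x') auto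
    have ff: "f' = f" using eq xe xe' by simp
    have h: "g \<in> cArr B" "g' \<in> cArr B" "cDom B g = b" "cCod B g = b'" "cDom B g' = b" "cCod B g' = b'" "iso B p'"
      "cCod B g = cDom B p'" "cCod B g' = cDom B p'"
      and e: "cComp B (FA F f) p = cComp B p' g" "cComp B (FA F f') p = cComp B p' g'" using x x' xe xe' by auto
    have "g = g'" by (rule FF.D.iso_mono[OF h(7)]) (use h e ff in auto)
    thus "x = x'" using xe xe' ff by simp
  qed
qed

lemma Q_surjeq: "surjective_equivalence C B (QQ B)"
  unfolding surjective_equivalence_def
proof (intro conjI)
  show "is_functor C B (QQ B)" by (rule Q_functor)
  show "\<forall>b\<in>cObj B. \<exists>a\<in>cObj C. FO (QQ B) a = b"
  proof
    fix b assume b: "b \<in> cObj B"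
    obtain q where q: "q \<in> cArr B" "cDom B q = b" "cCod B q = FO F (FO G b)"
      "cComp B q (\<epsilon> b) = cId B (FO F (FO G b))" "cComp B (\<epsilon> b) q = cId B b" using FF.D.iso_inv[OF eps_iso[OF b]] b by auto
    have "iso B q" unfolding iso_def using q b by (intro conjI bexI[of _ "\<epsilon> b"]) auto
    hence "(FO G b, b, q) \<in> cObj C" using b q by simp
    thus "\<exists>X\<in>cObj C. FO (QQ B) X = b" by (intro bexI[of _ "(FO G b, b, q)"]) simp_all
  qed
  show "\<forall>a\<in>cObj C. \<forall>b\<in>cObj C. \<forall>g\<in>hom B (FO (QQ B) a) (FO (QQ B) b). \<exists>f\<in>hom C a b. FA (QQ B) f = g"
    unfolding C_sel(1) ball_obj
  proof (intro allI impI ballI)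
    fix a b p a' b' p' g
    assume X: "(a,b,p) \<in> Cobj A B F" and Y: "(a',b',p') \<in> Cobj A B F" and g: "g \<in> hom B (FO (QQ B) (a,b,p)) (FO (QQ B) (a',b',p'))"
    have h: "a \<in> cObj A" "b \<in> cObj B" "p \<in> cArr B" "cDom B p = b" "cCod B p = FO F a" "iso B p"
      "a' \<in> cObj A" "b' \<in> cObj B" "p' \<in> cArr B" "cDom B p' = b'" "cCod B p' = FO F a'" "iso B p'"
      "g \<in> cArr B" "cDom B g = b" "cCod B g = b'" using X Y g by auto
    obtain q where q: "q \<in> cArr B" "cDom B q = FO F a" "cCod B q = b"
      "cComp B q p = cId B b" "cComp B p q = cId B (FO F a)" using FF.D.iso_inv[OF h(6)] h by auto
    define k where "k = cComp B p' (cComp B g q)"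
    have k: "k \<in> cArr B" "cDom B k = FO F a" "cCod B k = FO F a'" unfolding k_def using h q by auto
    obtain f where f: "f \<in> cArr A" "cDom A f = a" "cCod A f = a'" "FA F f = k"
      using F_full[OF h(1) h(7) k] by blast
    have e: "cComp B (FA F f) p = cComp B p' g" unfolding f(4) k_def using h q
      by (simp add: FF.D.comp_reassoc[OF q(4)])
    have "((a,b,p),(f,g),(a',b',p')) \<in> cArr C" using X Y h f e by simp
    thus "\<exists>x\<in>hom C (a,b,p) (a',b',p'). FA (QQ B) x = g"
      by (intro bexI[of _ "((a,b,p),(f,g),(a',b',p'))"]) (simp_all del: arr_mem C_sel add: C_sel(3,4))
  qed
  show "\<forall>a\<in>cObj C. \<forall>b\<in>cObj C. \<forall>f\<in>hom C a b. \<forall>f'\<in>hom C a b. FA (QQ B) f = FA (QQ B) f' \<longrightarrow> f = f'"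
    unfolding C_sel(1) ball_obj
  proof (intro allI impI ballI)
    fix a b p a' b' p' x x'
    assume X: "(a,b,p) \<in> Cobj A B F" and Y: "(a',b',p') \<in> Cobj A B F"
      and x: "x \<in> hom C (a,b,p) (a',b',p')" and x': "x' \<in> hom C (a,b,p) (a',b',p')" and eq: "FA (QQ B) x = FA (QQ B) x'"
    obtain f g where xe: "x = ((a,b,p),(f,g),(a',b',p'))" using x by (cases x) auto
    obtain f' g' where xe': "x' = ((a,b,p),(f',g'),(a',b',p'))" using x' by (cases x') auto
    have gg: "g' = g" using eq xe xe' by simp
    have h: "f \<in> cArr A" "f' \<in> cArr A" "cDom A f = a" "cCod A f = a'" "cDom A f' = a" "cCod A f' = a'" "iso B p"
      "cCod B p = FO F a" "p \<in> cArr B"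
      and e: "cComp B (FA F f) p = cComp B p' g" "cComp B (FA F f') p = cComp B p' g'" using x x' xe xe' by auto
    have "FA F f = FA F f'" by (rule FF.D.iso_epi[OF h(7)]) (use h e gg in auto)
    hence "f = f'" by (rule F_faithful[rotated -1]) (use h in auto)
    thus "x = x'" using xe xe' gg by simp
  qed
qed

end

lemma forward:
  fixes A :: "('a, 'am) moncat" and B :: "('b, 'bm) moncat"
  assumes "monoidal_category A" "monoidal_category B" "monoidally_equivalent A B"
  shows "\<exists>(C :: ('a \<times> 'b \<times> 'bm, ('a \<times> 'b \<times> 'bm) \<times> ('am \<times> 'bm) \<times> ('a \<times> 'b \<times> 'bm)) moncat) P Q.
               monoidal_category C
             \<and> strict_monoidal_functor C A P \<and> surjective_equivalence C A P
             \<and> strict_monoidal_functor C B Q \<and> surjective_equivalence C B Q"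
proof -
  obtain F G \<eta> \<epsilon> where h: "strong_monoidal_functor A B F" "strong_monoidal_functor B A G"
      "monoidal_nat_iso A A (mid A) (mcomp A F G) \<eta>" "monoidal_nat_iso B B (mcomp B G F) (mid B) \<epsilon>"
    using assms(3) unfolding monoidally_equivalent_def by blast
  interpret E: Eqv A B F G \<eta> \<epsilon>
    using assms h by (simp add: Eqv_def Eqv_axioms_def MC_def SMF_def SMF_axioms_def)
  show ?thesis using E.C_monoidal E.P_strict E.P_surjeq E.Q_strict E.Q_surjeq by blast
qed



definition sec :: "('o,'m) moncat \<Rightarrow> ('o,'m,'p,'n) mfun \<Rightarrow> 'p \<Rightarrow> 'o" where
  "sec C P a = (SOME X. X \<in> cObj C \<and> FO P X = a)"
definition lift :: "('o,'m) moncat \<Rightarrow> ('o,'m,'p,'n) mfun \<Rightarrow> 'o \<Rightarrow> 'o \<Rightarrow> 'n \<Rightarrow> 'm" where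
  "lift C P X Y f = (SOME x. x \<in> hom C X Y \<and> FA P x = f)"

locale SE = SMF C A P for C :: "('o,'m) moncat" and A :: "('p,'n) moncat" and P +
  assumes strict: "strict_monoidal_functor C A P" and se: "surjective_equivalence C A P"
begin

lemma P_to[simp]: "X \<in> cObj C \<Longrightarrow> Y \<in> cObj C \<Longrightarrow> FO P (cTo C X Y) = cTo A (FO P X) (FO P Y)"
  using strict by (simp add: strict_monoidal_functor_def)
lemma P_Mu[simp]: "X \<in> cObj C \<Longrightarrow> Y \<in> cObj C \<Longrightarrow> Mu P X Y = cId A (cTo A (FO P X) (FO P Y))"
  using strict by (simp add: strict_monoidal_functor_def)
lemma P_unit[simp]: "FO P (cUnit C) = cUnit A"
  using strict by (simp add: strict_monoidal_functor_def)
lemma P_Eps[simp]: "Eps P = cId A (cUnit A)"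
  using strict by (simp add: strict_monoidal_functor_def)
lemma P_ta[simp]: "x \<in> cArr C \<Longrightarrow> y \<in> cArr C \<Longrightarrow> FA P (cTa C x y) = cTa A (FA P x) (FA P y)"
  using Mu_nat[of x y] by simp
lemma P_assoc[simp]: "X \<in> cObj C \<Longrightarrow> Y \<in> cObj C \<Longrightarrow> Z \<in> cObj C \<Longrightarrow> FA P (cAssoc C X Y Z) = cAssoc A (FO P X) (FO P Y) (FO P Z)"
  using hexagon[of X Y Z] by simp
lemma P_lunit[simp]: "X \<in> cObj C \<Longrightarrow> FA P (cLunit C X) = cLunit A (FO P X)"
  using lunit[of X] by simp
lemma P_runit[simp]: "X \<in> cObj C \<Longrightarrow> FA P (cRunit C X) = cRunit A (FO P X)"
  using runit[of X] by simp

lemma se_surj: "\<forall>b\<in>cObj A. \<exists>a\<in>cObj C. FO P a = b"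
  using se[unfolded surjective_equivalence_def] by (elim conjE) assumption
lemma se_full: "\<forall>a\<in>cObj C. \<forall>b\<in>cObj C. \<forall>g\<in>hom A (FO P a) (FO P b). \<exists>f\<in>hom C a b. FA P f = g"
  using se[unfolded surjective_equivalence_def] by (elim conjE) assumption
lemma se_faithful: "\<forall>a\<in>cObj C. \<forall>b\<in>cObj C. \<forall>f\<in>hom C a b. \<forall>f'\<in>hom C a b. FA P f = FA P f' \<longrightarrow> f = f'"
  using se[unfolded surjective_equivalence_def] by (elim conjE) assumption

lemma sec_obj[simp]: "a \<in> cObj A \<Longrightarrow> sec C P a \<in> cObj C"
  and sec_P[simp]: "a \<in> cObj A \<Longrightarrow> FO P (sec C P a) = a"
proof -
  assume a: "a \<in> cObj A"
  have "\<exists>X. X \<in> cObj C \<and> FO P X = a" using se_surj a by blast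
  hence "sec C P a \<in> cObj C \<and> FO P (sec C P a) = a" unfolding sec_def by (rule someI_ex)
  thus "sec C P a \<in> cObj C" "FO P (sec C P a) = a" by auto
qed

lemma lift_props: assumes "X \<in> cObj C" "Y \<in> cObj C" "f \<in> cArr A" "cDom A f = FO P X" "cCod A f = FO P Y"
  shows "lift C P X Y f \<in> cArr C \<and> cDom C (lift C P X Y f) = X \<and> cCod C (lift C P X Y f) = Y \<and> FA P (lift C P X Y f) = f"
proof -
  have "f \<in> hom A (FO P X) (FO P Y)" using assms by simp
  hence "\<exists>x\<in>hom C X Y. FA P x = f" using se_full assms(1,2) by blast
  hence "\<exists>x. x \<in> hom C X Y \<and> FA P x = f" by blast
  hence "lift C P X Y f \<in> hom C X Y \<and> FA P (lift C P X Y f) = f" unfolding lift_def by (rule someI_ex)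
  thus ?thesis by simp
qed

lemma lift_arr[simp]: "X \<in> cObj C \<Longrightarrow> Y \<in> cObj C \<Longrightarrow> f \<in> cArr A \<Longrightarrow> cDom A f = FO P X \<Longrightarrow> cCod A f = FO P Y \<Longrightarrow> lift C P X Y f \<in> cArr C"
  and lift_dom[simp]: "X \<in> cObj C \<Longrightarrow> Y \<in> cObj C \<Longrightarrow> f \<in> cArr A \<Longrightarrow> cDom A f = FO P X \<Longrightarrow> cCod A f = FO P Y \<Longrightarrow> cDom C (lift C P X Y f) = X"
  and lift_cod[simp]: "X \<in> cObj C \<Longrightarrow> Y \<in> cObj C \<Longrightarrow> f \<in> cArr A \<Longrightarrow> cDom A f = FO P X \<Longrightarrow> cCod A f = FO P Y \<Longrightarrow> cCod C (lift C P X Y f) = Y"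
  and lift_P[simp]: "X \<in> cObj C \<Longrightarrow> Y \<in> cObj C \<Longrightarrow> f \<in> cArr A \<Longrightarrow> cDom A f = FO P X \<Longrightarrow> cCod A f = FO P Y \<Longrightarrow> FA P (lift C P X Y f) = f"
  using lift_props by blast+

lemma faithful: assumes "x \<in> cArr C" "y \<in> cArr C" "cDom C x = cDom C y" "cCod C x = cCod C y" "FA P x = FA P y" shows "x = y"
proof -
  have "x \<in> hom C (cDom C x) (cCod C x)" "y \<in> hom C (cDom C x) (cCod C x)" using assms by simp_all
  thus ?thesis using se_faithful assms(1,5) C.dom_obj C.cod_obj by blast
qed

lemma lift_id_iso: assumes "X \<in> cObj C" "Y \<in> cObj C" "FO P X = FO P Y"
  shows "iso C (lift C P X Y (cId A (FO P X)))"
proof -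
  let ?f = "lift C P X Y (cId A (FO P X))" and ?g = "lift C P Y X (cId A (FO P X))"
  have 1: "cComp C ?g ?f = cId C X" by (rule faithful) (use assms in simp_all)
  have 2: "cComp C ?f ?g = cId C Y" by (rule faithful) (use assms in simp_all)
  show ?thesis unfolding iso_def
    apply (rule conjI) using assms apply simp
    apply (rule bexI[of _ ?g]) using 1 2 assms by auto
qed

end

definition bld :: "('o,'m) moncat \<Rightarrow> ('p,'n) moncat \<Rightarrow> ('o,'m,'p,'n) mfun \<Rightarrow> ('o,'m,'q,'k) mfun \<Rightarrow> ('p,'n,'q,'k) mfun" where
  "bld C A P Q = \<lparr>FO = (\<lambda>a. FO Q (sec C P a)),
     FA = (\<lambda>f. FA Q (lift C P (sec C P (cDom A f)) (sec C P (cCod A f)) f)),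
     Mu = (\<lambda>a b. FA Q (lift C P (cTo C (sec C P a) (sec C P b)) (sec C P (cTo A a b)) (cId A (cTo A a b)))),
     Eps = FA Q (lift C P (cUnit C) (sec C P (cUnit A)) (cId A (cUnit A)))\<rparr>"

locale Span = PS: SE C A P + QS: SE C B Q
  for C :: "('o,'m) moncat" and A :: "('p,'n) moncat" and B :: "('q,'k) moncat" and P Q
begin

abbreviation "s \<equiv> sec C P"
abbreviation "L \<equiv> lift C P"

lemma F_sel[simp]: "FO (bld C A P Q) a = FO Q (s a)"
  "FA (bld C A P Q) f = FA Q (L (s (cDom A f)) (s (cCod A f)) f)"
  "Mu (bld C A P Q) a b = FA Q (L (cTo C (s a) (s b)) (s (cTo A a b)) (cId A (cTo A a b)))"
  "Eps (bld C A P Q) = FA Q (L (cUnit C) (s (cUnit A)) (cId A (cUnit A)))"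
  by (simp_all add: bld_def)

lemma F_functor: "is_functor A B (bld C A P Q)"
  unfolding is_functor_def
proof (intro conjI ballI impI)
  fix a assume a: "a \<in> cObj A"
  show "FO (bld C A P Q) a \<in> cObj B" using a by simp
  have "L (s a) (s a) (cId A a) = cId C (s a)" by (rule PS.faithful) (use a in simp_all)
  thus "FA (bld C A P Q) (cId A a) = cId B (FO (bld C A P Q) a)" using a by simp
next
  fix f assume f: "f \<in> cArr A"
  show "FA (bld C A P Q) f \<in> hom B (FO (bld C A P Q) (cDom A f)) (FO (bld C A P Q) (cCod A f))" using f by simp
next
  fix f g assume f: "f \<in> cArr A" and g: "g \<in> cArr A" and fg: "cCod A f = cDom A g"
  have "L (s (cDom A f)) (s (cCod A g)) (cComp A g f) = cComp C (L (s (cDom A g)) (s (cCod A g)) g) (L (s (cDom A f)) (s (cCod A f)) f)"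
    by (rule PS.faithful) (use f g fg in simp_all)
  thus "FA (bld C A P Q) (cComp A g f) = cComp B (FA (bld C A P Q) g) (FA (bld C A P Q) f)"
    using f g fg by simp
qed

lemma Mu_F_iso: assumes "a \<in> cObj A" "b \<in> cObj A" shows "iso B (Mu (bld C A P Q) a b)"
proof -
  have "iso C (L (cTo C (s a) (s b)) (s (cTo A a b)) (cId A (FO P (cTo C (s a) (s b)))))"
    by (rule PS.lift_id_iso) (use assms in simp_all)
  hence "iso B (FA Q (L (cTo C (s a) (s b)) (s (cTo A a b)) (cId A (FO P (cTo C (s a) (s b))))))"
    by (rule QS.FA_iso)
  thus ?thesis using assms by simp
qed

lemma Eps_F_iso: "iso B (Eps (bld C A P Q))"
proof -
  have "iso C (L (cUnit C) (s (cUnit A)) (cId A (FO P (cUnit C))))"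
    by (rule PS.lift_id_iso) simp_all
  hence "iso B (FA Q (L (cUnit C) (s (cUnit A)) (cId A (FO P (cUnit C)))))"
    by (rule QS.FA_iso)
  thus ?thesis by simp
qed

lemma F_strong: "strong_monoidal_functor A B (bld C A P Q)"
  unfolding strong_monoidal_functor_def
proof (intro conjI ballI)
  show "monoidal_category A" by (rule PS.D.mc)
  show "monoidal_category B" by (rule QS.D.mc)
  show "is_functor A B (bld C A P Q)" by (rule F_functor)
  fix a b assume a: "a \<in> cObj A" and b: "b \<in> cObj A"
  show "Mu (bld C A P Q) a b \<in> hom B (cTo B (FO (bld C A P Q) a) (FO (bld C A P Q) b)) (FO (bld C A P Q) (cTo A a b))"
    using a b by simp
  show "iso B (Mu (bld C A P Q) a b)" using Mu_F_iso a b .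
next
  fix f g assume f: "f \<in> cArr A" and g: "g \<in> cArr A"
  let ?x = "cComp C (L (cTo C (s (cCod A f)) (s (cCod A g))) (s (cTo A (cCod A f) (cCod A g))) (cId A (cTo A (cCod A f) (cCod A g))))
                  (cTa C (L (s (cDom A f)) (s (cCod A f)) f) (L (s (cDom A g)) (s (cCod A g)) g))"
  let ?y = "cComp C (L (s (cTo A (cDom A f) (cDom A g))) (s (cTo A (cCod A f) (cCod A g))) (cTa A f g))
                    (L (cTo C (s (cDom A f)) (s (cDom A g))) (s (cTo A (cDom A f) (cDom A g))) (cId A (cTo A (cDom A f) (cDom A g))))"
  have xy: "?x = ?y" by (rule PS.faithful) (use f g in simp_all)
  show "cComp B (Mu (bld C A P Q) (cCod A f) (cCod A g)) (cTa B (FA (bld C A P Q) f) (FA (bld C A P Q) g))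
        = cComp B (FA (bld C A P Q) (cTa A f g)) (Mu (bld C A P Q) (cDom A f) (cDom A g))"
    using arg_cong[OF xy, of "FA Q"] f g by simp
next
  show "Eps (bld C A P Q) \<in> hom B (cUnit B) (FO (bld C A P Q) (cUnit A))" by simp
  show "iso B (Eps (bld C A P Q))" by (rule Eps_F_iso)
next
  fix a b c assume a: "a \<in> cObj A" and b: "b \<in> cObj A" and c: "c \<in> cObj A"
  let ?x = "cComp C (L (s (cTo A (cTo A a b) c)) (s (cTo A a (cTo A b c))) (cAssoc A a b c))
             (cComp C (L (cTo C (s (cTo A a b)) (s c)) (s (cTo A (cTo A a b) c)) (cId A (cTo A (cTo A a b) c)))
               (cTa C (L (cTo C (s a) (s b)) (s (cTo A a b)) (cId A (cTo A a b))) (cId C (s c))))"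
  let ?y = "cComp C (L (cTo C (s a) (s (cTo A b c))) (s (cTo A a (cTo A b c))) (cId A (cTo A a (cTo A b c))))
             (cComp C (cTa C (cId C (s a)) (L (cTo C (s b) (s c)) (s (cTo A b c)) (cId A (cTo A b c))))
               (cAssoc C (s a) (s b) (s c)))"
  have xy: "?x = ?y" by (rule PS.faithful) (use a b c in simp_all)
  show "cComp B (FA (bld C A P Q) (cAssoc A a b c))
            (cComp B (Mu (bld C A P Q) (cTo A a b) c) (cTa B (Mu (bld C A P Q) a b) (cId B (FO (bld C A P Q) c))))
        = cComp B (Mu (bld C A P Q) a (cTo A b c))
            (cComp B (cTa B (cId B (FO (bld C A P Q) a)) (Mu (bld C A P Q) b c))
               (cAssoc B (FO (bld C A P Q) a) (FO (bld C A P Q) b) (FO (bld C A P Q) c)))"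
    using arg_cong[OF xy, of "FA Q"] a b c by simp
next
  fix a assume a: "a \<in> cObj A"
  let ?x = "cComp C (L (s (cTo A (cUnit A) a)) (s a) (cLunit A a))
             (cComp C (L (cTo C (s (cUnit A)) (s a)) (s (cTo A (cUnit A) a)) (cId A (cTo A (cUnit A) a)))
               (cTa C (L (cUnit C) (s (cUnit A)) (cId A (cUnit A))) (cId C (s a))))"
  let ?y = "cLunit C (s a)"
  have xy: "?x = ?y" by (rule PS.faithful) (use a in simp_all)
  show "cComp B (FA (bld C A P Q) (cLunit A a))
            (cComp B (Mu (bld C A P Q) (cUnit A) a) (cTa B (Eps (bld C A P Q)) (cId B (FO (bld C A P Q) a))))
        = cLunit B (FO (bld C A P Q) a)"
    using arg_cong[OF xy, of "FA Q"] a by simp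
next
  fix a assume a: "a \<in> cObj A"
  let ?x = "cComp C (L (s (cTo A a (cUnit A))) (s a) (cRunit A a))
             (cComp C (L (cTo C (s a) (s (cUnit A))) (s (cTo A a (cUnit A))) (cId A (cTo A a (cUnit A))))
               (cTa C (cId C (s a)) (L (cUnit C) (s (cUnit A)) (cId A (cUnit A)))))"
  let ?y = "cRunit C (s a)"
  have xy: "?x = ?y" by (rule PS.faithful) (use a in simp_all)
  show "cComp B (FA (bld C A P Q) (cRunit A a))
            (cComp B (Mu (bld C A P Q) a (cUnit A)) (cTa B (cId B (FO (bld C A P Q) a)) (Eps (bld C A P Q))))
        = cRunit B (FO (bld C A P Q) a)"
    using arg_cong[OF xy, of "FA Q"] a by simp
qed

abbreviation "t \<equiv> sec C Q"
abbreviation "K \<equiv> lift C Q"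

lemma G_sel[simp]: "FO (bld C B Q P) a = FO P (t a)"
  "FA (bld C B Q P) f = FA P (K (t (cDom B f)) (t (cCod B f)) f)"
  "Mu (bld C B Q P) a b = FA P (K (cTo C (t a) (t b)) (t (cTo B a b)) (cId B (cTo B a b)))"
  "Eps (bld C B Q P) = FA P (K (cUnit C) (t (cUnit B)) (cId B (cUnit B)))"
  by (simp_all add: bld_def)

lemma mid_sel[simp]: "FO (mid X) = (\<lambda>a. a)" "FA (mid X) = (\<lambda>f. f)" "Mu (mid X) a b = cId X (cTo X a b)" "Eps (mid X) = cId X (cUnit X)"
  by (simp_all add: mid_def)
lemma mcomp_sel[simp]: "FO (mcomp E F1 G1) a = FO G1 (FO F1 a)" "FA (mcomp E F1 G1) f = FA G1 (FA F1 f)"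
  "Mu (mcomp E F1 G1) a b = cComp E (FA G1 (Mu F1 a b)) (Mu G1 (FO F1 a) (FO F1 b))"
  "Eps (mcomp E F1 G1) = cComp E (FA G1 (Eps F1)) (Eps G1)"
  by (simp_all add: mcomp_def)

definition eta where "eta a = FA P (K (s a) (t (FO Q (s a))) (cId B (FO Q (s a))))"

lemma eta_nat_iso: "monoidal_nat_iso A A (mid A) (mcomp A (bld C A P Q) (bld C B Q P)) eta"
  unfolding monoidal_nat_iso_def
proof (intro conjI ballI)
  fix a assume a: "a \<in> cObj A"
  show "eta a \<in> hom A (FO (mid A) a) (FO (mcomp A (bld C A P Q) (bld C B Q P)) a)"
    using a by (simp add: eta_def)
  have "iso C (K (s a) (t (FO Q (s a))) (cId B (FO Q (s a))))"
    by (rule QS.lift_id_iso) (use a in simp_all)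
  thus "iso A (eta a)" unfolding eta_def by (rule PS.FA_iso)
next
  fix f assume f: "f \<in> cArr A"
  let ?Lf = "L (s (cDom A f)) (s (cCod A f)) f"
  let ?x = "cComp C (K (s (cCod A f)) (t (FO Q (s (cCod A f)))) (cId B (FO Q (s (cCod A f))))) ?Lf"
  let ?y = "cComp C (K (t (FO Q (s (cDom A f)))) (t (FO Q (s (cCod A f)))) (FA Q ?Lf))
                    (K (s (cDom A f)) (t (FO Q (s (cDom A f)))) (cId B (FO Q (s (cDom A f)))))"
  have xy: "?x = ?y" by (rule QS.faithful) (use f in simp_all)
  show "cComp A (eta (cCod A f)) (FA (mid A) f) = cComp A (FA (mcomp A (bld C A P Q) (bld C B Q P)) f) (eta (cDom A f))"
    using arg_cong[OF xy, of "FA P"] f by (simp add: eta_def)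
next
  fix a b assume a: "a \<in> cObj A" and b: "b \<in> cObj A"
  let ?M = "FA Q (L (cTo C (s a) (s b)) (s (cTo A a b)) (cId A (cTo A a b)))"
  let ?x = "cComp C (K (s (cTo A a b)) (t (FO Q (s (cTo A a b)))) (cId B (FO Q (s (cTo A a b)))))
                    (L (cTo C (s a) (s b)) (s (cTo A a b)) (cId A (cTo A a b)))"
  let ?y = "cComp C (K (t (cTo B (FO Q (s a)) (FO Q (s b)))) (t (FO Q (s (cTo A a b)))) ?M)
             (cComp C (K (cTo C (t (FO Q (s a))) (t (FO Q (s b)))) (t (cTo B (FO Q (s a)) (FO Q (s b)))) (cId B (cTo B (FO Q (s a)) (FO Q (s b)))))
               (cTa C (K (s a) (t (FO Q (s a))) (cId B (FO Q (s a)))) (K (s b) (t (FO Q (s b))) (cId B (FO Q (s b))))))"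
  have xy: "?x = ?y" by (rule QS.faithful) (use a b in simp_all)
  show "cComp A (eta (cTo A a b)) (Mu (mid A) a b) = cComp A (Mu (mcomp A (bld C A P Q) (bld C B Q P)) a b) (cTa A (eta a) (eta b))"
    using arg_cong[OF xy, of "FA P"] a b by (simp add: eta_def)
next
  let ?E = "FA Q (L (cUnit C) (s (cUnit A)) (cId A (cUnit A)))"
  let ?x = "cComp C (K (s (cUnit A)) (t (FO Q (s (cUnit A)))) (cId B (FO Q (s (cUnit A)))))
                    (L (cUnit C) (s (cUnit A)) (cId A (cUnit A)))"
  let ?y = "cComp C (K (t (cUnit B)) (t (FO Q (s (cUnit A)))) ?E) (K (cUnit C) (t (cUnit B)) (cId B (cUnit B)))"
  have xy: "?x = ?y" by (rule QS.faithful) simp_all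
  show "cComp A (eta (cUnit A)) (Eps (mid A)) = Eps (mcomp A (bld C A P Q) (bld C B Q P))"
    using arg_cong[OF xy, of "FA P"] by (simp add: eta_def)
qed

definition eps where "eps b = FA Q (L (s (FO P (t b))) (t b) (cId A (FO P (t b))))"

lemma eps_nat_iso: "monoidal_nat_iso B B (mcomp B (bld C B Q P) (bld C A P Q)) (mid B) eps"
  unfolding monoidal_nat_iso_def
proof (intro conjI ballI)
  fix b assume b: "b \<in> cObj B"
  show "eps b \<in> hom B (FO (mcomp B (bld C B Q P) (bld C A P Q)) b) (FO (mid B) b)"
    using b by (simp add: eps_def)
  have "iso C (L (s (FO P (t b))) (t b) (cId A (FO P (s (FO P (t b))))))"
    by (rule PS.lift_id_iso) (use b in simp_all)
  hence "iso B (FA Q (L (s (FO P (t b))) (t b) (cId A (FO P (s (FO P (t b)))))))" by (rule QS.FA_iso)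
  thus "iso B (eps b)" unfolding eps_def using b by simp
next
  fix g assume g: "g \<in> cArr B"
  let ?Kg = "K (t (cDom B g)) (t (cCod B g)) g"
  let ?x = "cComp C (L (s (FO P (t (cCod B g)))) (t (cCod B g)) (cId A (FO P (t (cCod B g)))))
                    (L (s (FO P (t (cDom B g)))) (s (FO P (t (cCod B g)))) (FA P ?Kg))"
  let ?y = "cComp C ?Kg (L (s (FO P (t (cDom B g)))) (t (cDom B g)) (cId A (FO P (t (cDom B g)))))"
  have xy: "?x = ?y" by (rule PS.faithful) (use g in simp_all)
  show "cComp B (eps (cCod B g)) (FA (mcomp B (bld C B Q P) (bld C A P Q)) g) = cComp B (FA (mid B) g) (eps (cDom B g))"
    using arg_cong[OF xy, of "FA Q"] g by (simp add: eps_def)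
next
  fix a b assume a: "a \<in> cObj B" and b: "b \<in> cObj B"
  let ?M = "FA P (K (cTo C (t a) (t b)) (t (cTo B a b)) (cId B (cTo B a b)))"
  let ?x = "cComp C (L (s (FO P (t (cTo B a b)))) (t (cTo B a b)) (cId A (FO P (t (cTo B a b)))))
             (cComp C (L (s (cTo A (FO P (t a)) (FO P (t b)))) (s (FO P (t (cTo B a b)))) ?M)
               (L (cTo C (s (FO P (t a))) (s (FO P (t b)))) (s (cTo A (FO P (t a)) (FO P (t b)))) (cId A (cTo A (FO P (t a)) (FO P (t b))))))"
  let ?y = "cComp C (K (cTo C (t a) (t b)) (t (cTo B a b)) (cId B (cTo B a b)))
             (cTa C (L (s (FO P (t a))) (t a) (cId A (FO P (t a)))) (L (s (FO P (t b))) (t b) (cId A (FO P (t b)))))"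
  have xy: "?x = ?y" by (rule PS.faithful) (use a b in simp_all)
  show "cComp B (eps (cTo B a b)) (Mu (mcomp B (bld C B Q P) (bld C A P Q)) a b) = cComp B (Mu (mid B) a b) (cTa B (eps a) (eps b))"
    using arg_cong[OF xy, of "FA Q"] a b by (simp add: eps_def)
next
  let ?E = "FA P (K (cUnit C) (t (cUnit B)) (cId B (cUnit B)))"
  let ?x = "cComp C (L (s (FO P (t (cUnit B)))) (t (cUnit B)) (cId A (FO P (t (cUnit B)))))
             (cComp C (L (s (cUnit A)) (s (FO P (t (cUnit B)))) ?E) (L (cUnit C) (s (cUnit A)) (cId A (cUnit A))))"
  let ?y = "K (cUnit C) (t (cUnit B)) (cId B (cUnit B))"
  have xy: "?x = ?y" by (rule PS.faithful) simp_all
  show "cComp B (eps (cUnit B)) (Eps (mcomp B (bld C B Q P) (bld C A P Q))) = Eps (mid B)"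
    using arg_cong[OF xy, of "FA Q"] by (simp add: eps_def)
qed

end

lemma backward:
  assumes "monoidal_category C" "monoidal_category A" "monoidal_category B"
    "strict_monoidal_functor C A P" "surjective_equivalence C A P"
    "strict_monoidal_functor C B Q" "surjective_equivalence C B Q"
  shows "monoidally_equivalent A B"
proof -
  have sP: "strong_monoidal_functor C A P" and sQ: "strong_monoidal_functor C B Q"
    using assms by (simp_all add: strict_monoidal_functor_def)
  interpret S: Span C A B P Q
    using assms sP sQ by (simp add: Span_def SE_def SE_axioms_def SMF_def SMF_axioms_def MC_def)
  interpret S': Span C B A Q P
    using assms sP sQ by (simp add: Span_def SE_def SE_axioms_def SMF_def SMF_axioms_def MC_def)
  show ?thesis unfolding monoidally_equivalent_def
    using S.F_strong S'.F_strong S.eta_nat_iso S.eps_nat_iso by blast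
qed


theorem theoremB:
  fixes A :: "('a, 'am) moncat" and B :: "('b, 'bm) moncat"
  assumes "monoidal_category A" and "monoidal_category B"
  shows "(monoidally_equivalent A B \<longleftrightarrow>
            (\<exists>(C :: ('a \<times> 'b \<times> 'bm, ('a \<times> 'b \<times> 'bm) \<times> ('am \<times> 'bm) \<times> ('a \<times> 'b \<times> 'bm)) moncat) P Q.
               monoidal_category C
             \<and> strict_monoidal_functor C A P \<and> surjective_equivalence C A P
             \<and> strict_monoidal_functor C B Q \<and> surjective_equivalence C B Q))
       \<and> (\<forall>(C :: ('c, 'cm) moncat) P Q.
               monoidal_category C
             \<and> strict_monoidal_functor C A P \<and> surjective_equivalence C A P
             \<and> strict_monoidal_functor C B Q \<and> surjective_equivalence C B Q
             \<longrightarrow> monoidally_equivalent A B)"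
proof (intro conjI iffI allI impI)
  assume "monoidally_equivalent A B"
  thus "\<exists>(C :: ('a \<times> 'b \<times> 'bm, ('a \<times> 'b \<times> 'bm) \<times> ('am \<times> 'bm) \<times> ('a \<times> 'b \<times> 'bm)) moncat) P Q.
               monoidal_category C
             \<and> strict_monoidal_functor C A P \<and> surjective_equivalence C A P
             \<and> strict_monoidal_functor C B Q \<and> surjective_equivalence C B Q"
    using forward assms by blast
next
  assume "\<exists>(C :: ('a \<times> 'b \<times> 'bm, ('a \<times> 'b \<times> 'bm) \<times> ('am \<times> 'bm) \<times> ('a \<times> 'b \<times> 'bm)) moncat) P Q.
               monoidal_category C
             \<and> strict_monoidal_functor C A P \<and> surjective_equivalence C A P
             \<and> strict_monoidal_functor C B Q \<and> surjective_equivalence C B Q"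
  thus "monoidally_equivalent A B" using backward assms by blast
next
  fix C :: "('c, 'cm) moncat" and P Q
  assume "monoidal_category C
             \<and> strict_monoidal_functor C A P \<and> surjective_equivalence C A P
             \<and> strict_monoidal_functor C B Q \<and> surjective_equivalence C B Q"
  thus "monoidally_equivalent A B" using backward assms by blast
qed

end
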